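(* There is an integer $k_0$ such that for any $k\ge k_0$ and any density $\alpha\le\alpha_0$ the following holds w.h.p. over the choice of the random $k$-CNF formula $\Phi=\Phi(k,n,\lfloor\alpha n\rfloor)$. For any set of good variables $V$ that is $r_0$-distributed we have $|V|\ge(r_0-\delta)(k\alpha/\Delta)n$.
   Context: The random $k$-CNF formula $\Phi(k,n,m)=(\mathcal V,\mathcal C)$ is uniform over $k$-CNF formulas with $n$ variables and $m$ clauses of $k$ literals each (repetitions allowed); w.h.p. means with probability $1-o(1)$ as $n\to\infty$. For a clause $c$, $\mathrm{var}(c)$ is its set of variables; the degree of a variable is its number of literal occurrences. Constants: $r_0=0.117841$, $\delta=0.00001$, $\Delta=\lceil 2^{(r_0-2\delta)k}\rceil$, $\alpha_0=2^{(r_0-2\delta)k}/k^3$; high-degree means degree at least $\Delta$. Bad variables/clauses: $\mathcal V_0$ = high-degree variables, $\mathcal C_0$ = clauses with at least 3 variables in $\mathcal V_0$; for $i\ge1$, $\mathcal V_i=\mathcal V_{i-1}\cup\mathrm{var}(\mathcal C_{i-1})$, $\mathcal C_i=\{c:|\mathrm{var}(c)\cap\mathcal V_i|\ge3\}$, until $\mathcal V_i=\mathcal V_{i-1}$; $\mathcal V_{\mathrm{bad}}=\mathcal V_i$, $\mathcal C_{\mathrm{bad}}=\mathcal C_i$; good variables/clauses are the complements. A set $V$ of good variables is $r_0$-distributed if $|\mathrm{var}(c)\cap V|\ge r_0(k-3)$ for every good clause $c$. *)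

theory Defs
  imports Complex_Main
begin

(* Literals are pairs (variable, sign) with variables in {0..<n};
   a k-clause is a list of k literals; a formula is a list of m clauses
   (repetitions allowed, clauses indexed by position j < m). *)

type_synonym literal = "nat \<times> bool"
type_synonym clause = "literal list"
type_synonym formula = "clause list"

definition kcnf_space :: "nat \<Rightarrow> nat \<Rightarrow> nat \<Rightarrow> formula set" where
  "kcnf_space k n m = {F. length F = m \<and>
     (\<forall>c\<in>set F. length c = k \<and> (\<forall>l\<in>set c. fst l < n))}"

definition kcnf_prob :: "nat \<Rightarrow> nat \<Rightarrow> nat \<Rightarrow> (formula \<Rightarrow> bool) \<Rightarrow> real" where
  "kcnf_prob k n m P =
     real (card {F \<in> kcnf_space k n m. P F}) / real (card (kcnf_space k n m))"

definition r0 :: real where "r0 = 0.117841"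
definition delta :: real where "delta = 0.00001"

definition Delta :: "nat \<Rightarrow> nat" where
  "Delta k = nat \<lceil>2 powr ((r0 - 2 * delta) * real k)\<rceil>"

definition alpha0 :: "nat \<Rightarrow> real" where
  "alpha0 k = 2 powr ((r0 - 2 * delta) * real k) / real k ^ 3"

definition clause_vars :: "clause \<Rightarrow> nat set" where
  "clause_vars c = fst ` set c"

definition degree :: "formula \<Rightarrow> nat \<Rightarrow> nat" where
  "degree F x = sum_list (map (\<lambda>c. length (filter (\<lambda>l. fst l = x) c)) F)"

definition high_degree_vars :: "nat \<Rightarrow> nat \<Rightarrow> formula \<Rightarrow> nat set" where
  "high_degree_vars k n F = {x \<in> {0..<n}. Delta k \<le> degree F x}"

definition clauses_hitting :: "formula \<Rightarrow> nat set \<Rightarrow> nat set" where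
  "clauses_hitting F V = {j. j < length F \<and> 3 \<le> card (clause_vars (F ! j) \<inter> V)}"

fun Vseq :: "nat \<Rightarrow> nat \<Rightarrow> formula \<Rightarrow> nat \<Rightarrow> nat set" where
  "Vseq k n F 0 = high_degree_vars k n F"
| "Vseq k n F (Suc i) = Vseq k n F i \<union>
     (\<Union>j\<in>clauses_hitting F (Vseq k n F i). clause_vars (F ! j))"

(* the sequence is increasing and bounded, so its union is the stable value V_i *)
definition V_bad :: "nat \<Rightarrow> nat \<Rightarrow> formula \<Rightarrow> nat set" where
  "V_bad k n F = (\<Union>i. Vseq k n F i)"

definition C_bad :: "nat \<Rightarrow> nat \<Rightarrow> formula \<Rightarrow> nat set" where
  "C_bad k n F = clauses_hitting F (V_bad k n F)"

definition good_vars :: "nat \<Rightarrow> nat \<Rightarrow> formula \<Rightarrow> nat set" where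
  "good_vars k n F = {0..<n} - V_bad k n F"

definition good_clauses :: "nat \<Rightarrow> nat \<Rightarrow> formula \<Rightarrow> nat set" where
  "good_clauses k n F = {0..<length F} - C_bad k n F"

definition r0_distributed :: "nat \<Rightarrow> nat \<Rightarrow> formula \<Rightarrow> nat set \<Rightarrow> bool" where
  "r0_distributed k n F V \<longleftrightarrow> V \<subseteq> good_vars k n F \<and>
     (\<forall>j\<in>good_clauses k n F.
        r0 * (real k - 3) \<le> real (card (clause_vars (F ! j) \<inter> V)))"

end

theory Submission
  imports Defs "HOL-Library.FuncSet"
begin

lemma pow_fact_le_exp:
  fixes x :: real assumes "x \<ge> 0" shows "x ^ n / fact n \<le> exp x"
proof -
  have s: "summable (\<lambda>n. x^n /\<^sub>R fact n)" using exp_converges sums_summable by blast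
  have "sum (\<lambda>n. x^n /\<^sub>R fact n) {n} \<le> suminf (\<lambda>n. x^n /\<^sub>R fact n)"
    by (rule sum_le_suminf[OF s]) (use assms in auto)
  also have "\<dots> = exp x" using exp_converges sums_unique by metis
  finally show ?thesis by (simp add: divide_inverse mult.commute)
qed

lemma pow_div_fact_le_exp_pow:
  "real s ^ s / fact s \<le> exp 1 ^ s"
  using pow_fact_le_exp[of "real s" s] by (simp add: exp_of_nat_mult[symmetric])

lemma choose_le_pow_fact:
  "real (n choose s) \<le> real n ^ s / fact s"
proof (cases "s \<le> n")
  case True
  have e: "(fact n :: nat) = ((n choose s) * fact s) * fact (n - s)"
    using binomial_fact_lemma[OF True] by (simp add: ac_simps)
  have "(n choose s) * fact s = (fact n :: nat) div fact (n - s)"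
    unfolding e by simp
  also have "\<dots> \<le> n ^ s" using fact_div_fact_le_pow[OF True] .
  finally have "real ((n choose s) * fact s) \<le> real (n ^ s)" by linarith
  hence "real (n choose s) * fact s \<le> real n ^ s" by simp
  thus ?thesis by (simp add: field_simps)
next
  case False
  hence "n choose s = 0" by (intro binomial_eq_0) simp
  thus ?thesis by (simp del: binomial_eq_0_iff)
qed

lemma lists_nth_card:
  assumes "\<And>j. j < m \<Longrightarrow> finite (A j)"
  shows "card {xs. length xs = m \<and> (\<forall>j<m. xs ! j \<in> A j)} = (\<Prod>j<m. card (A j))"
proof -
  let ?L = "{xs. length xs = m \<and> (\<forall>j<m. xs ! j \<in> A j)}"
  have "bij_betw (\<lambda>xs. restrict (nth xs) {..<m}) ?L (PiE {..<m} A)"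
  proof (rule bij_betw_byWitness[where f' = "\<lambda>f. map f [0..<m]"])
    show "\<forall>a\<in>?L. map (restrict ((!) a) {..<m}) [0..<m] = a"
    proof
      fix a assume a: "a \<in> ?L"
      show "map (restrict ((!) a) {..<m}) [0..<m] = a"
        using a by (intro nth_equalityI) auto
    qed
    show "\<forall>a'\<in>PiE {..<m} A. restrict ((!) (map a' [0..<m])) {..<m} = a'"
    proof
      fix f assume f: "f \<in> (PiE {..<m} A)"
      show "restrict ((!) (map f [0..<m])) {..<m} = f"
      proof
        fix x show "restrict ((!) (map f [0..<m])) {..<m} x = f x"
        proof (cases "x < m")
          case True thus ?thesis by simp
        next
          case False thus ?thesis using f by (metis PiE_arb lessThan_iff restrict_apply)
        qed
      qed
    qed
    show "(\<lambda>xs. restrict ((!) xs) {..<m}) ` ?L \<subseteq> (PiE {..<m} A)"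
    proof (rule image_subsetI)
      fix xs assume xs: "xs \<in> ?L"
      show "restrict ((!) xs) {..<m} \<in> (PiE {..<m} A)"
        using xs by (simp only: restrict_PiE_iff mem_Collect_eq lessThan_iff) blast
    qed
    show "(\<lambda>f. map f [0..<m]) ` (PiE {..<m} A) \<subseteq> ?L"
    proof (rule image_subsetI)
      fix f assume f: "f \<in> (PiE {..<m} A)"
      show "map f [0..<m] \<in> ?L" using f by (simp add: PiE_iff)
    qed
  qed
  hence "card ?L = card (PiE {..<m} A)"
    by (rule bij_betw_same_card)
  also have "\<dots> = (\<Prod>j<m. card (A j))" by (rule card_PiE) simp
  finally show ?thesis .
qed

lemma lists_nth_finite:
  assumes "\<And>j. j < m \<Longrightarrow> finite (A j)"
  shows "finite {xs. length xs = m \<and> (\<forall>j<m. xs ! j \<in> A j)}"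
proof -
  have "{xs. length xs = m \<and> (\<forall>j<m. xs ! j \<in> A j)} \<subseteq> {xs. set xs \<subseteq> (\<Union>j<m. A j) \<and> length xs = m}"
  proof (rule subsetI)
    fix xs assume xs: "xs \<in> {xs. length xs = m \<and> (\<forall>j<m. xs ! j \<in> A j)}"
    have "set xs \<subseteq> (\<Union>j<m. A j)"
    proof
      fix x assume "x \<in> set xs"
      then obtain i where "i < length xs" "x = xs ! i" by (auto simp: in_set_conv_nth)
      thus "x \<in> (\<Union>j<m. A j)" using xs by blast
    qed
    thus "xs \<in> {xs. set xs \<subseteq> (\<Union>j<m. A j) \<and> length xs = m}" using xs by simp
  qed
  moreover have "finite {xs. set xs \<subseteq> (\<Union>j<m. A j) \<and> length xs = m}"
    by (rule finite_lists_length_eq) (use assms in auto)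
  ultimately show ?thesis by (rule finite_subset)
qed

definition pos_event :: "(nat \<times> nat) set \<Rightarrow> nat set \<Rightarrow> formula \<Rightarrow> bool" where
  "pos_event P S F = (\<forall>(j,i)\<in>P. fst (F ! j ! i) \<in> S)"

lemma kcnf_space_alt:
  "kcnf_space k n m = {F. length F = m \<and> (\<forall>j<m. F ! j \<in>
      {c. length c = k \<and> (\<forall>i<k. c ! i \<in> {..<n} \<times> UNIV)})}"
proof (intro set_eqI iffI)
  fix F assume F0: "F \<in> kcnf_space k n m"
  have F: "length F = m \<and> (\<forall>c\<in>set F. length c = k \<and> (\<forall>l\<in>set c. fst l < n))"
    using F0 unfolding kcnf_space_def by simp
  have "\<forall>j<m. F ! j \<in> {c. length c = k \<and> (\<forall>i<k. c ! i \<in> {..<n} \<times> (UNIV::bool set))}"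
  proof (intro allI impI)
    fix j assume j: "j < m"
    hence Fj: "F ! j \<in> set F" using F by simp
    hence len: "length (F ! j) = k" using F by blast
    have "\<forall>i<k. F ! j ! i \<in> {..<n} \<times> (UNIV::bool set)"
    proof (intro allI impI)
      fix i assume "i < k"
      hence "F ! j ! i \<in> set (F ! j)" using len by simp
      thus "F ! j ! i \<in> {..<n} \<times> (UNIV::bool set)" using F Fj by (auto simp: mem_Times_iff)
    qed
    thus "F ! j \<in> {c. length c = k \<and> (\<forall>i<k. c ! i \<in> {..<n} \<times> (UNIV::bool set))}" using len by simp
  qed
  thus "F \<in> {F. length F = m \<and> (\<forall>j<m. F ! j \<in>
      {c. length c = k \<and> (\<forall>i<k. c ! i \<in> {..<n} \<times> UNIV)})}" using F by simp
next
  fix F :: formula assume F: "F \<in> {F. length F = m \<and> (\<forall>j<m. F ! j \<in>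
      {c. length c = k \<and> (\<forall>i<k. c ! i \<in> {..<n} \<times> (UNIV::bool set))})}"
  show "F \<in> kcnf_space k n m"
    unfolding kcnf_space_def
  proof (safe)
    show "length F = m" using F by simp
  next
    fix c assume "c \<in> set F"
    then obtain j where j: "j < length F" "c = F ! j" by (auto simp: in_set_conv_nth)
    thus "length c = k" using F by auto
  next
    fix c a b assume "c \<in> set F" "(a, b) \<in> set c"
    then obtain j i where j: "j < length F" "c = F ! j" "i < length c" "(a,b) = c ! i"
      by (auto simp: in_set_conv_nth)
    thus "fst (a, b) < n" using F by (auto simp: mem_Times_iff)
  qed
qed

lemma pos_event_set:
  assumes "S \<subseteq> {..<n}" "P \<subseteq> {..<m} \<times> {..<k}"
  shows "{F \<in> kcnf_space k n m. pos_event P S F} =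
    {F. length F = m \<and> (\<forall>j<m. F ! j \<in>
      {c. length c = k \<and> (\<forall>i<k. c ! i \<in> (if (j,i) \<in> P then S else {..<n}) \<times> UNIV)})}"
proof (intro set_eqI iffI)
  fix F assume F: "F \<in> {F \<in> kcnf_space k n m. pos_event P S F}"
  hence len: "length F = m" and cl: "\<And>j. j < m \<Longrightarrow> length (F ! j) = k"
    and lit: "\<And>j i. j < m \<Longrightarrow> i < k \<Longrightarrow> fst (F ! j ! i) < n"
    and pe: "\<And>j i. (j,i) \<in> P \<Longrightarrow> fst (F ! j ! i) \<in> S"
    unfolding kcnf_space_alt pos_event_def by (auto simp: mem_Times_iff)
  show "F \<in> {F. length F = m \<and> (\<forall>j<m. F ! j \<in>
      {c. length c = k \<and> (\<forall>i<k. c ! i \<in> (if (j,i) \<in> P then S else {..<n}) \<times> UNIV)})}"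
  proof (simp only: mem_Collect_eq, intro conjI[OF len] allI impI)
    fix j assume j: "j < m"
    show "length (F ! j) = k \<and> (\<forall>i<k. F ! j ! i \<in> (if (j,i) \<in> P then S else {..<n}) \<times> UNIV)"
      using cl[OF j] lit[OF j] pe by (auto simp: mem_Times_iff)
  qed
next
  fix F :: formula assume F: "F \<in> {F. length F = m \<and> (\<forall>j<m. F ! j \<in>
      {c. length c = k \<and> (\<forall>i<k. c ! i \<in> (if (j,i) \<in> P then S else {..<n}) \<times> (UNIV::bool set))})}"
  hence len: "length F = m" and cl: "\<And>j. j < m \<Longrightarrow> length (F ! j) = k"
    and lit: "\<And>j i. j < m \<Longrightarrow> i < k \<Longrightarrow> fst (F ! j ! i) \<in> (if (j,i) \<in> P then S else {..<n})"
    by (auto simp: mem_Times_iff)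
  have "F \<in> kcnf_space k n m"
    unfolding kcnf_space_alt
  proof (simp only: mem_Collect_eq, intro conjI[OF len] allI impI)
    fix j assume j: "j < m"
    have "\<And>i. i < k \<Longrightarrow> fst (F ! j ! i) < n"
    proof -
      fix i assume "i < k"
      from lit[OF j this] assms(1) show "fst (F ! j ! i) < n" by (auto split: if_splits)
    qed
    thus "length (F ! j) = k \<and> (\<forall>i<k. F ! j ! i \<in> {..<n} \<times> UNIV)"
      using cl[OF j] by (auto simp: mem_Times_iff)
  qed
  moreover have "pos_event P S F"
    unfolding pos_event_def
  proof (intro ballI, clarify)
    fix j i assume "(j,i) \<in> P"
    moreover hence "j < m" "i < k" using assms(2) by auto
    ultimately show "fst (F ! j ! i) \<in> S" using lit by fastforce
  qed
  ultimately show "F \<in> {F \<in> kcnf_space k n m. pos_event P S F}" by simp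
qed

lemma card_pos_event:
  assumes "S \<subseteq> {..<n}" "P \<subseteq> {..<m} \<times> {..<k}"
  shows "card {F \<in> kcnf_space k n m. pos_event P S F} =
     (2 * card S) ^ card P * (2 * n) ^ (k * m - card P)"
proof -
  have fS: "finite S" using assms(1) finite_subset by blast
  let ?f = "\<lambda>(j,i). if (j,i) \<in> P then 2 * card S else 2 * n"
  have "card {F \<in> kcnf_space k n m. pos_event P S F} =
     (\<Prod>j<m. card {c. length c = k \<and> (\<forall>i<k. c ! i \<in> (if (j,i) \<in> P then S else {..<n}) \<times> (UNIV::bool set))})"
    unfolding pos_event_set[OF assms]
    by (rule lists_nth_card, rule lists_nth_finite) (use fS in auto)
  also have "\<dots> = (\<Prod>j<m. \<Prod>i<k. ?f (j,i))"
  proof (rule prod.cong[OF refl])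
    fix j assume "j \<in> {..<m}"
    have "card {c. length c = k \<and> (\<forall>i<k. c ! i \<in> (if (j,i) \<in> P then S else {..<n}) \<times> (UNIV::bool set))}
       = (\<Prod>i<k. card ((if (j,i) \<in> P then S else {..<n}) \<times> (UNIV::bool set)))"
      by (rule lists_nth_card) (use fS in auto)
    also have "\<dots> = (\<Prod>i<k. ?f (j,i))"
      by (rule prod.cong[OF refl]) (simp add: card_cartesian_product)
    finally show "card {c. length c = k \<and> (\<forall>i<k. c ! i \<in> (if (j,i) \<in> P then S else {..<n}) \<times> (UNIV::bool set))}
       = (\<Prod>i<k. ?f (j,i))" .
  qed
  also have "\<dots> = (\<Prod>x\<in>{..<m} \<times> {..<k}. ?f x)"
    by (simp add: prod.cartesian_product)
  also have "\<dots> = (\<Prod>x\<in>{..<m} \<times> {..<k}. if x \<in> P then 2 * card S else 2 * n)"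
    by (intro prod.cong refl) (simp split: prod.splits)
  also have "\<dots> = (\<Prod>x\<in>({..<m} \<times> {..<k}) \<inter> {x. x \<in> P}. 2 * card S) *
                    (\<Prod>x\<in>({..<m} \<times> {..<k}) \<inter> - {x. x \<in> P}. 2 * n)"
    by (rule prod.If_cases) simp
  also have "({..<m} \<times> {..<k}) \<inter> {x. x \<in> P} = P" using assms(2) by auto
  also have "({..<m} \<times> {..<k}) \<inter> - {x. x \<in> P} = ({..<m} \<times> {..<k}) - P" by auto
  also have "card (({..<m} \<times> {..<k}) - P) = k * m - card P"
    using card_Diff_subset[OF finite_subset[OF assms(2)] assms(2)] by (simp add: card_cartesian_product mult.commute)
  hence "(\<Prod>x\<in>({..<m} \<times> {..<k}) - P. 2 * n) = (2 * n) ^ (k * m - card P)" by simp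
  finally show ?thesis by simp
qed

lemma card_kcnf_space: "card (kcnf_space k n m) = (2 * n) ^ (k * m)"
  using card_pos_event[of "{}" n "{}" m k] by (simp add: pos_event_def)

lemma finite_kcnf_space: "finite (kcnf_space k n m)"
  unfolding kcnf_space_alt by (rule lists_nth_finite) (auto intro: lists_nth_finite)

lemma prob_pos_event:
  assumes "S \<subseteq> {..<n}" "P \<subseteq> {..<m} \<times> {..<k}" "n > 0"
  shows "kcnf_prob k n m (pos_event P S) = (real (card S) / real n) ^ card P"
proof -
  have cP: "card P \<le> k * m"
    using card_mono[OF _ assms(2)] by (simp add: card_cartesian_product mult.commute)
  have "kcnf_prob k n m (pos_event P S) = real ((2 * card S) ^ card P * (2 * n) ^ (k * m - card P)) / real ((2 * n) ^ (k * m))"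
    unfolding kcnf_prob_def card_pos_event[OF assms(1,2)] card_kcnf_space ..
  also have "(2 * n) ^ (k * m) = (2 * n) ^ card P * (2 * n) ^ (k * m - card P)"
    using cP by (metis le_add_diff_inverse power_add)
  also have "real ((2 * card S) ^ card P * (2 * n) ^ (k * m - card P)) / real ((2 * n) ^ card P * (2 * n) ^ (k * m - card P))
     = (real (2 * card S) / real (2 * n)) ^ card P"
    using assms(3) by (simp add: power_divide)
  also have "real (2 * card S) / real (2 * n) = real (card S) / real n" by simp
  finally show ?thesis .
qed

definition vars_of :: "formula \<Rightarrow> nat set \<Rightarrow> nat set" where
  "vars_of F J = (\<Union>j\<in>J. clause_vars (F ! j))"

definition Eprop :: "nat \<Rightarrow> formula \<Rightarrow> nat \<Rightarrow> bool" where
  "Eprop k F T = (\<forall>J. J \<subseteq> {..<length F} \<longrightarrow> card J \<le> T \<longrightarrow> (k - 2) * card J \<le> card (vars_of F J))"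

lemma finite_clause_vars [simp]: "finite (clause_vars c)"
  unfolding clause_vars_def by simp

lemma card_clause_vars_le: "card (clause_vars c) \<le> length c"
  unfolding clause_vars_def using card_image_le[of "set c" fst] card_length[of c] by simp

lemma kcnf_space_D:
  assumes "F \<in> kcnf_space k n m"
  shows "length F = m" "\<And>j. j < m \<Longrightarrow> length (F ! j) = k"
    "\<And>j. j < m \<Longrightarrow> clause_vars (F ! j) \<subseteq> {..<n}"
proof -
  have F: "length F = m \<and> (\<forall>c\<in>set F. length c = k \<and> (\<forall>l\<in>set c. fst l < n))"
    using assms unfolding kcnf_space_def by simp
  thus "length F = m" by simp
  fix j assume "j < m"
  hence "F ! j \<in> set F" using F by simp
  thus "length (F ! j) = k" "clause_vars (F ! j) \<subseteq> {..<n}"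
    using F unfolding clause_vars_def by auto
qed

lemma step_bound:
  assumes fW: "finite W" and D: "finite D"
    and hit: "\<And>j. j \<in> D \<Longrightarrow> 3 \<le> card (clause_vars (F ! j) \<inter> W)"
    and len: "\<And>j. j \<in> D \<Longrightarrow> length (F ! j) = k"
  shows "card (W \<union> vars_of F D) \<le> card W + (k - 3) * card D"
proof -
  have eq: "W \<union> vars_of F D = W \<union> (\<Union>j\<in>D. clause_vars (F ! j) - W)"
    unfolding vars_of_def by blast
  have "card (W \<union> vars_of F D) \<le> card W + card (\<Union>j\<in>D. clause_vars (F ! j) - W)"
    unfolding eq by (rule card_Un_le)
  also have "card (\<Union>j\<in>D. clause_vars (F ! j) - W) \<le> (\<Sum>j\<in>D. card (clause_vars (F ! j) - W))"
    by (rule card_UN_le[OF D])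
  also have "\<dots> \<le> (\<Sum>j\<in>D. k - 3)"
  proof (rule sum_mono)
    fix j assume j: "j \<in> D"
    have "card (clause_vars (F ! j) - W) = card (clause_vars (F ! j)) - card (clause_vars (F ! j) \<inter> W)"
      by (rule card_Diff_subset_Int) simp
    also have "\<dots> \<le> k - 3" using hit[OF j] card_clause_vars_le[of "F ! j"] len[OF j] by linarith
    finally show "card (clause_vars (F ! j) - W) \<le> k - 3" .
  qed
  also have "\<dots> = (k - 3) * card D" by simp
  finally show ?thesis by simp
qed

lemma vars_of_mono: "J \<subseteq> J' \<Longrightarrow> vars_of F J \<subseteq> vars_of F J'"
  unfolding vars_of_def by blast

lemma vars_of_Un: "vars_of F (A \<union> B) = vars_of F A \<union> vars_of F B"
  unfolding vars_of_def by blast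

lemma closure_step:
  assumes fW: "finite W" and sub: "Jo \<subseteq> Jn" and Jn: "Jn \<subseteq> {..<length F}"
    and vo: "vars_of F Jo \<subseteq> W" and cW: "card W \<le> v0 + (k - 3) * card Jo"
    and cJo: "card Jo \<le> v0"
    and hit: "\<And>j. j \<in> Jn \<Longrightarrow> 3 \<le> card (clause_vars (F ! j) \<inter> W)"
    and len: "\<And>j. j \<in> Jn \<Longrightarrow> length (F ! j) = k"
    and E: "Eprop k F (v0 + 1)" and k3: "k \<ge> 3"
  shows "card Jn \<le> v0 \<and> card (W \<union> vars_of F Jn) \<le> v0 + (k - 3) * card Jn"
proof -
  have fJn: "finite Jn" using Jn finite_subset by blast
  have fJo: "finite Jo" using sub fJn finite_subset by blast
  have gen: "card (W \<union> vars_of F D) \<le> v0 + (k - 3) * (card Jo + card D)"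
    if D: "D \<subseteq> Jn - Jo" for D
  proof -
    have fD: "finite D" using D fJn finite_subset by blast
    have "card (W \<union> vars_of F D) \<le> card W + (k - 3) * card D"
      by (rule step_bound[OF fW fD]) (use D hit len in auto)
    thus ?thesis using cW by (simp add: algebra_simps)
  qed
  have vJn: "vars_of F Jn \<subseteq> W \<union> vars_of F (Jn - Jo)"
  proof -
    have "Jn = Jo \<union> (Jn - Jo)" using sub by blast
    hence "vars_of F Jn = vars_of F Jo \<union> vars_of F (Jn - Jo)" by (metis vars_of_Un)
    thus ?thesis using vo by blast
  qed
  have cdiff: "card (Jn - Jo) = card Jn - card Jo" using card_Diff_subset[OF fJo sub] .
  have cle: "card Jo \<le> card Jn" using card_mono[OF fJn sub] .
  have part2: "card (W \<union> vars_of F Jn) \<le> v0 + (k - 3) * card Jn"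
  proof -
    have "W \<union> vars_of F Jn = W \<union> vars_of F (Jn - Jo)"
      using vJn vars_of_mono[of "Jn - Jo" Jn F] by blast
    hence "card (W \<union> vars_of F Jn) \<le> v0 + (k - 3) * (card Jo + card (Jn - Jo))"
      using gen[of "Jn - Jo"] by simp
    also have "card Jo + card (Jn - Jo) = card Jn" using cdiff cle by simp
    finally show ?thesis .
  qed
  have part1: "card Jn \<le> v0"
  proof (rule ccontr)
    assume "\<not> card Jn \<le> v0"
    hence big: "v0 + 1 \<le> card Jn" by simp
    have "v0 + 1 - card Jo \<le> card (Jn - Jo)" using cdiff big by simp
    then obtain D where D: "D \<subseteq> Jn - Jo" "card D = v0 + 1 - card Jo"
      using obtain_subset_with_card_n by metis
    let ?J = "Jo \<union> D"
    have fD: "finite D" using D fJn finite_subset by blast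
    have disj: "Jo \<inter> D = {}" using D by blast
    have cJ: "card ?J = v0 + 1" using card_Un_disjoint[OF fJo fD disj] D cJo by simp
    have JF: "?J \<subseteq> {..<length F}" using sub Jn D by blast
    have "card ?J \<le> v0 + 1" using cJ by simp
    hence "(k - 2) * card ?J \<le> card (vars_of F ?J)"
      using E JF unfolding Eprop_def by blast
    also have "vars_of F ?J \<subseteq> W \<union> vars_of F D"
      using vo unfolding vars_of_Un by blast
    hence "card (vars_of F ?J) \<le> card (W \<union> vars_of F D)"
    proof (rule card_mono[rotated])
      show "finite (W \<union> vars_of F D)" unfolding vars_of_def using fW fD by simp
    qed
    also have "\<dots> \<le> v0 + (k - 3) * (card Jo + card D)" using gen[OF D(1)] .
    also have "card Jo + card D = v0 + 1" using D cJo by simp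
    finally have "(k - 2) * (v0 + 1) \<le> v0 + (k - 3) * (v0 + 1)" using cJ by simp
    moreover have "k - 2 = Suc (k - 3)" using k3 by simp
    hence "(k - 2) * (v0 + 1) = (k - 3) * (v0 + 1) + (v0 + 1)" by simp
    ultimately show False by simp
  qed
  show ?thesis using part1 part2 by simp
qed

lemma Vseq_Suc_le: "Vseq k n F i \<subseteq> Vseq k n F (Suc i)" by auto

lemma Vseq_mono: "i \<le> i' \<Longrightarrow> Vseq k n F i \<subseteq> Vseq k n F i'"
  using lift_Suc_mono_le[of "Vseq k n F", OF Vseq_Suc_le] by blast

lemma Vseq_Suc_vars: "Vseq k n F (Suc i) = Vseq k n F i \<union> vars_of F (clauses_hitting F (Vseq k n F i))"
  unfolding vars_of_def by simp

lemma clauses_hitting_sub: "clauses_hitting F V \<subseteq> {..<length F}"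
  unfolding clauses_hitting_def by auto

lemma clauses_hitting_mono:
  assumes "V \<subseteq> V'" shows "clauses_hitting F V \<subseteq> clauses_hitting F V'"
proof
  fix j assume "j \<in> clauses_hitting F V"
  hence j: "j < length F" "3 \<le> card (clause_vars (F ! j) \<inter> V)" unfolding clauses_hitting_def by auto
  have "card (clause_vars (F ! j) \<inter> V) \<le> card (clause_vars (F ! j) \<inter> V')"
    by (rule card_mono) (use assms in auto)
  thus "j \<in> clauses_hitting F V'" using j unfolding clauses_hitting_def by auto
qed

lemma Vseq_sub:
  assumes "F \<in> kcnf_space k n m" shows "Vseq k n F i \<subseteq> {..<n}"
proof (induction i)
  case 0 thus ?case by (auto simp: high_degree_vars_def)
next
  case (Suc i)
  have "vars_of F (clauses_hitting F (Vseq k n F i)) \<subseteq> {..<n}"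
  proof -
    have "\<And>j. j \<in> clauses_hitting F (Vseq k n F i) \<Longrightarrow> clause_vars (F ! j) \<subseteq> {..<n}"
    proof -
      fix j assume "j \<in> clauses_hitting F (Vseq k n F i)"
      hence "j < m" using clauses_hitting_sub kcnf_space_D(1)[OF assms] by blast
      thus "clause_vars (F ! j) \<subseteq> {..<n}" by (rule kcnf_space_D(3)[OF assms])
    qed
    thus ?thesis unfolding vars_of_def by blast
  qed
  thus ?case using Suc.IH Vseq_Suc_vars[of k n F i] by simp
qed

lemma hit_def: "j \<in> clauses_hitting F V \<Longrightarrow> 3 \<le> card (clause_vars (F ! j) \<inter> V)"
  unfolding clauses_hitting_def by simp

lemma closure_induct:
  assumes F: "F \<in> kcnf_space k n m" and k3: "k \<ge> 3"
    and E: "Eprop k F (card (Vseq k n F 0) + 1)"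
  shows "card (clauses_hitting F (Vseq k n F i)) \<le> card (Vseq k n F 0) \<and>
         card (Vseq k n F (Suc i)) \<le> card (Vseq k n F 0) + (k - 3) * card (clauses_hitting F (Vseq k n F i))"
proof (induction i)
  case 0
  have fW: "finite (Vseq k n F 0)" using Vseq_sub[OF F] finite_subset by blast
  have len: "\<And>j. j \<in> clauses_hitting F (Vseq k n F 0) \<Longrightarrow> length (F ! j) = k"
    using clauses_hitting_sub kcnf_space_D(1,2)[OF F] by blast
  have "card (clauses_hitting F (Vseq k n F 0)) \<le> card (Vseq k n F 0) \<and>
        card (Vseq k n F 0 \<union> vars_of F (clauses_hitting F (Vseq k n F 0)))
          \<le> card (Vseq k n F 0) + (k - 3) * card (clauses_hitting F (Vseq k n F 0))"
  proof (rule closure_step[OF fW _ clauses_hitting_sub _ _ _ _ len E k3])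
    show "{} \<subseteq> clauses_hitting F (Vseq k n F 0)" by simp
    show "vars_of F {} \<subseteq> Vseq k n F 0" by (simp add: vars_of_def)
    show "card (Vseq k n F 0) \<le> card (Vseq k n F 0) + (k - 3) * card {}" by simp
    show "card {} \<le> card (Vseq k n F 0)" by simp
    show "\<And>j. j \<in> clauses_hitting F (Vseq k n F 0) \<Longrightarrow> 3 \<le> card (clause_vars (F ! j) \<inter> Vseq k n F 0)"
      by (rule hit_def)
  qed
  thus ?case by (simp only: Vseq_Suc_vars[of k n F 0])
next
  case (Suc i)
  let ?W = "Vseq k n F (Suc i)"
  have fW: "finite ?W" using Vseq_sub[OF F] finite_subset by blast
  have len: "\<And>j. j \<in> clauses_hitting F ?W \<Longrightarrow> length (F ! j) = k"
    using clauses_hitting_sub kcnf_space_D(1,2)[OF F] by blast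
  have sub: "clauses_hitting F (Vseq k n F i) \<subseteq> clauses_hitting F ?W"
    by (rule clauses_hitting_mono[OF Vseq_Suc_le])
  have vo: "vars_of F (clauses_hitting F (Vseq k n F i)) \<subseteq> ?W"
    by (simp only: Vseq_Suc_vars[of k n F i]) blast
  have "card (clauses_hitting F ?W) \<le> card (Vseq k n F 0) \<and>
        card (?W \<union> vars_of F (clauses_hitting F ?W))
          \<le> card (Vseq k n F 0) + (k - 3) * card (clauses_hitting F ?W)"
  proof (rule closure_step[OF fW sub clauses_hitting_sub vo _ _ _ len E k3])
    show "card ?W \<le> card (Vseq k n F 0) + (k - 3) * card (clauses_hitting F (Vseq k n F i))"
      using Suc.IH by (rule conjunct2)
    show "card (clauses_hitting F (Vseq k n F i)) \<le> card (Vseq k n F 0)"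
      using Suc.IH by (rule conjunct1)
    show "\<And>j. j \<in> clauses_hitting F ?W \<Longrightarrow> 3 \<le> card (clause_vars (F ! j) \<inter> ?W)"
      by (rule hit_def)
  qed
  thus ?case by (simp only: Vseq_Suc_vars[of k n F "Suc i"])
qed

lemma finite_sub_chain:
  fixes A :: "nat \<Rightarrow> 'a set"
  assumes "finite X" "X \<subseteq> (\<Union>i. A i)" "\<And>i i'. i \<le> i' \<Longrightarrow> A i \<subseteq> A i'"
  shows "\<exists>i. X \<subseteq> A i"
  using assms(1,2)
proof (induction X rule: finite_induct)
  case empty thus ?case by simp
next
  case (insert x X)
  then obtain i1 where i1: "X \<subseteq> A i1" by blast
  from insert obtain i2 where i2: "x \<in> A i2" by blast
  have a: "A i1 \<subseteq> A (max i1 i2)" by (rule assms(3)) simp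
  have b: "A i2 \<subseteq> A (max i1 i2)" by (rule assms(3)) simp
  have "insert x X \<subseteq> A (max i1 i2)"
    using i1 i2 a b by blast
  thus ?case by blast
qed

lemma C_bad_bound:
  assumes F: "F \<in> kcnf_space k n m" and k3: "k \<ge> 3"
    and E: "Eprop k F (card (high_degree_vars k n F) + 1)"
  shows "card (C_bad k n F) \<le> card (high_degree_vars k n F)"
proof -
  have fin: "finite (V_bad k n F)"
  proof (rule finite_subset)
    show "V_bad k n F \<subseteq> {..<n}" using Vseq_sub[OF F] unfolding V_bad_def by blast
  qed simp
  have "V_bad k n F \<subseteq> (\<Union>i. Vseq k n F i)" unfolding V_bad_def by (rule order_refl)
  from finite_sub_chain[of "V_bad k n F" "Vseq k n F", OF fin this Vseq_mono]
  obtain i where i: "V_bad k n F \<subseteq> Vseq k n F i" by blast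
  have "Vseq k n F i \<subseteq> V_bad k n F" unfolding V_bad_def by (rule UN_upper) simp
  hence "V_bad k n F = Vseq k n F i" using i by (rule antisym[rotated])
  hence "C_bad k n F = clauses_hitting F (Vseq k n F i)" unfolding C_bad_def by simp
  moreover have "Vseq k n F 0 = high_degree_vars k n F" by simp
  moreover have "card (clauses_hitting F (Vseq k n F i)) \<le> card (Vseq k n F 0)"
    using closure_induct[OF F k3, of i] E \<open>Vseq k n F 0 = high_degree_vars k n F\<close> by argo
  ultimately show ?thesis by argo
qed

definition cnt :: "nat \<Rightarrow> clause \<Rightarrow> nat" where
  "cnt x c = length (filter (\<lambda>l. fst l = x) c)"

lemma degree_sum:
  assumes "length F = m"
  shows "degree F x = (\<Sum>j<m. cnt x (F ! j))"
proof -
  have "degree F x = sum_list (map (\<lambda>c. cnt x c) F)"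
    unfolding degree_def cnt_def by simp
  also have "\<dots> = (\<Sum>j = 0..<length (map (\<lambda>c. cnt x c) F). map (\<lambda>c. cnt x c) F ! j)"
    by (rule sum_list_sum_nth)
  also have "\<dots> = (\<Sum>j<m. cnt x (F ! j))"
    using assms by (simp add: atLeast0LessThan)
  finally show ?thesis .
qed

lemma cnt_pos: "x \<in> clause_vars c \<Longrightarrow> 1 \<le> cnt x c"
proof -
  assume "x \<in> clause_vars c"
  then obtain l where "l \<in> set c" "fst l = x" unfolding clause_vars_def by auto
  hence "filter (\<lambda>l. fst l = x) c \<noteq> []" by (auto simp: filter_empty_conv)
  thus "1 \<le> cnt x c" unfolding cnt_def by (simp add: Suc_le_eq)
qed

lemma card_cv_le_cnt:
  assumes fV: "finite V"
  shows "card (clause_vars c \<inter> V) \<le> (\<Sum>x\<in>V. cnt x c)"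
proof -
  have "card (clause_vars c \<inter> V) = (\<Sum>x\<in>clause_vars c \<inter> V. 1)" by simp
  also have "\<dots> \<le> (\<Sum>x\<in>clause_vars c \<inter> V. cnt x c)"
    by (rule sum_mono) (rule cnt_pos, blast)
  also have "\<dots> \<le> (\<Sum>x\<in>V. cnt x c)"
    by (rule sum_mono2[OF fV]) auto
  finally show ?thesis .
qed

lemma good_degree:
  assumes "x \<in> good_vars k n F" shows "degree F x < Delta k"
proof -
  have x: "x < n" "x \<notin> V_bad k n F" using assms unfolding good_vars_def by auto
  have "high_degree_vars k n F \<subseteq> V_bad k n F"
    unfolding V_bad_def by (metis UNIV_I UN_upper Vseq.simps(1))
  hence "x \<notin> high_degree_vars k n F" using x by blast
  thus ?thesis using x unfolding high_degree_vars_def by auto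
qed

lemma double_count:
  assumes F: "F \<in> kcnf_space k n m" and V: "V \<subseteq> good_vars k n F" and G: "G \<subseteq> {..<m}"
  shows "(\<Sum>j\<in>G. card (clause_vars (F ! j) \<inter> V)) \<le> card V * Delta k"
proof -
  have fV: "finite V" using V unfolding good_vars_def by (meson finite_atLeastLessThan finite_subset Diff_subset subset_trans)
  have "(\<Sum>j\<in>G. card (clause_vars (F ! j) \<inter> V)) \<le> (\<Sum>j<m. card (clause_vars (F ! j) \<inter> V))"
    by (rule sum_mono2) (use G in auto)
  also have "\<dots> \<le> (\<Sum>j<m. \<Sum>x\<in>V. cnt x (F ! j))"
    by (rule sum_mono) (rule card_cv_le_cnt[OF fV])
  also have "\<dots> = (\<Sum>x\<in>V. \<Sum>j<m. cnt x (F ! j))"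
    by (rule sum.swap)
  also have "\<dots> = (\<Sum>x\<in>V. degree F x)"
    using degree_sum[OF kcnf_space_D(1)[OF F]] by simp
  also have "\<dots> \<le> (\<Sum>x\<in>V. Delta k)"
  proof (rule sum_mono)
    fix x assume "x \<in> V"
    hence "x \<in> good_vars k n F" using V by blast
    thus "degree F x \<le> Delta k" using good_degree[of x k n F] by simp
  qed
  also have "\<dots> = card V * Delta k" by simp
  finally show ?thesis .
qed

lemma det_main:
  assumes F: "F \<in> kcnf_space k n m" and k3: "k \<ge> 3"
    and E: "Eprop k F (card (high_degree_vars k n F) + 1)"
    and R: "r0_distributed k n F V"
  shows "(real m - real (card (high_degree_vars k n F))) * (r0 * (real k - 3)) \<le> real (card V) * real (Delta k)"
proof -
  let ?G = "good_clauses k n F"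
  let ?v0 = "card (high_degree_vars k n F)"
  have lenF: "length F = m" using kcnf_space_D(1)[OF F] .
  have CB: "C_bad k n F \<subseteq> {0..<m}"
    unfolding C_bad_def using clauses_hitting_sub[of F "V_bad k n F"] lenF by (simp add: atLeast0LessThan)
  have cG: "card ?G = m - card (C_bad k n F)"
    unfolding good_clauses_def lenF using card_Diff_subset[OF finite_subset[OF CB] CB] by simp
  have cCB: "card (C_bad k n F) \<le> ?v0" by (rule C_bad_bound[OF F k3 E])
  have cCBm: "card (C_bad k n F) \<le> m" using card_mono[OF _ CB] by simp
  have G1: "real m - real ?v0 \<le> real (card ?G)" using cG cCB cCBm by linarith
  have r0pos: "0 \<le> r0 * (real k - 3)" using k3 by (simp add: r0_def)
  have Gsub: "?G \<subseteq> {..<m}" unfolding good_clauses_def lenF by auto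
  have fG: "finite ?G" using Gsub finite_subset by blast
  have V: "V \<subseteq> good_vars k n F" using R unfolding r0_distributed_def by simp
  have "(real m - real ?v0) * (r0 * (real k - 3)) \<le> real (card ?G) * (r0 * (real k - 3))"
    by (rule mult_right_mono[OF G1 r0pos])
  also have "\<dots> = (\<Sum>j\<in>?G. r0 * (real k - 3))" by simp
  also have "\<dots> \<le> (\<Sum>j\<in>?G. real (card (clause_vars (F ! j) \<inter> V)))"
    by (rule sum_mono) (use R in \<open>simp add: r0_distributed_def\<close>)
  also have "\<dots> = real (\<Sum>j\<in>?G. card (clause_vars (F ! j) \<inter> V))" by simp
  also have "\<dots> \<le> real (card V * Delta k)"
    using double_count[OF F V Gsub] by linarith
  finally show ?thesis by simp
qed

lemma prob_nonneg: "0 \<le> kcnf_prob k n m P"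
  unfolding kcnf_prob_def by simp

lemma prob_le1: "kcnf_prob k n m P \<le> 1"
proof -
  have "card {F \<in> kcnf_space k n m. P F} \<le> card (kcnf_space k n m)"
    by (rule card_mono[OF finite_kcnf_space]) auto
  thus ?thesis unfolding kcnf_prob_def
    by (cases "card (kcnf_space k n m) = 0") (simp_all add: divide_le_eq_1)
qed

lemma prob_mono:
  assumes "\<And>F. F \<in> kcnf_space k n m \<Longrightarrow> P F \<Longrightarrow> Q F"
  shows "kcnf_prob k n m P \<le> kcnf_prob k n m Q"
proof -
  have "card {F \<in> kcnf_space k n m. P F} \<le> card {F \<in> kcnf_space k n m. Q F}"
    by (rule card_mono) (use finite_kcnf_space assms in auto)
  thus ?thesis unfolding kcnf_prob_def by (simp add: divide_right_mono)
qed

lemma prob_UN: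
  assumes "finite X"
  shows "kcnf_prob k n m (\<lambda>F. \<exists>x\<in>X. Q x F) \<le> (\<Sum>x\<in>X. kcnf_prob k n m (Q x))"
proof -
  have eq: "{F \<in> kcnf_space k n m. \<exists>x\<in>X. Q x F} = (\<Union>x\<in>X. {F \<in> kcnf_space k n m. Q x F})" by blast
  have "card {F \<in> kcnf_space k n m. \<exists>x\<in>X. Q x F} \<le> (\<Sum>x\<in>X. card {F \<in> kcnf_space k n m. Q x F})"
    unfolding eq by (rule card_UN_le[OF assms])
  hence "real (card {F \<in> kcnf_space k n m. \<exists>x\<in>X. Q x F}) \<le> (\<Sum>x\<in>X. real (card {F \<in> kcnf_space k n m. Q x F}))"
    unfolding of_nat_sum[symmetric] of_nat_le_iff .
  hence "real (card {F \<in> kcnf_space k n m. \<exists>x\<in>X. Q x F}) / real (card (kcnf_space k n m))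
     \<le> (\<Sum>x\<in>X. real (card {F \<in> kcnf_space k n m. Q x F})) / real (card (kcnf_space k n m))"
    by (rule divide_right_mono) simp
  thus ?thesis unfolding kcnf_prob_def by (simp add: sum_divide_distrib)
qed

lemma prob_or:
  "kcnf_prob k n m (\<lambda>F. P F \<or> Q F) \<le> kcnf_prob k n m P + kcnf_prob k n m Q"
proof -
  have "kcnf_prob k n m (\<lambda>F. \<exists>x\<in>{True, False}. (if x then P F else Q F))
        \<le> (\<Sum>x\<in>{True, False}. kcnf_prob k n m (\<lambda>F. if x then P F else Q F))"
    by (rule prob_UN) simp
  moreover have "(\<lambda>F. \<exists>x\<in>{True, False}. (if x then P F else Q F)) = (\<lambda>F. P F \<or> Q F)" by auto
  ultimately show ?thesis by simp
qed

lemma prob_compl: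
  assumes "n > 0"
  shows "kcnf_prob k n m P = 1 - kcnf_prob k n m (\<lambda>F. \<not> P F)"
proof -
  have pos: "card (kcnf_space k n m) > 0" using assms by (simp add: card_kcnf_space)
  have "card {F \<in> kcnf_space k n m. P F} + card {F \<in> kcnf_space k n m. \<not> P F} = card (kcnf_space k n m)"
  proof -
    have "{F \<in> kcnf_space k n m. P F} \<union> {F \<in> kcnf_space k n m. \<not> P F} = kcnf_space k n m" by blast
    moreover have "{F \<in> kcnf_space k n m. P F} \<inter> {F \<in> kcnf_space k n m. \<not> P F} = {}" by blast
    ultimately show ?thesis
      using card_Un_disjoint[of "{F \<in> kcnf_space k n m. P F}" "{F \<in> kcnf_space k n m. \<not> P F}"]
        finite_kcnf_space by simp
  qed
  hence "real (card {F \<in> kcnf_space k n m. P F}) = real (card (kcnf_space k n m)) - real (card {F \<in> kcnf_space k n m. \<not> P F})"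
    by linarith
  thus ?thesis unfolding kcnf_prob_def using pos by (simp add: diff_divide_distrib)
qed

lemma cnt_card:
  assumes "length c = k"
  shows "cnt x c = card {i. i < k \<and> fst (c ! i) = x}"
  unfolding cnt_def length_filter_conv_card assms ..

definition posx :: "nat \<Rightarrow> nat \<Rightarrow> formula \<Rightarrow> nat \<Rightarrow> (nat \<times> nat) set" where
  "posx m k F x = {p \<in> {..<m} \<times> {..<k}. fst (F ! fst p ! snd p) = x}"

lemma card_posx:
  assumes F: "F \<in> kcnf_space k n m"
  shows "card (posx m k F x) = degree F x"
proof -
  have "posx m k F x = (SIGMA j:{..<m}. {i. i < k \<and> fst (F ! j ! i) = x})"
    unfolding posx_def by auto
  hence "card (posx m k F x) = (\<Sum>j<m. card {i. i < k \<and> fst (F ! j ! i) = x})"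
    by simp
  also have "\<dots> = (\<Sum>j<m. cnt x (F ! j))"
    by (rule sum.cong[OF refl]) (simp add: cnt_card[OF kcnf_space_D(2)[OF F]])
  also have "\<dots> = degree F x" using degree_sum[OF kcnf_space_D(1)[OF F]] by simp
  finally show ?thesis .
qed

lemma p1_event:
  assumes F: "F \<in> kcnf_space k n m" and s: "s \<le> card (high_degree_vars k n F)"
  shows "\<exists>S\<in>{S. S \<subseteq> {..<n} \<and> card S = s}. \<exists>P\<in>{P. P \<subseteq> {..<m} \<times> {..<k} \<and> card P = Delta k * s}.
           pos_event P S F"
proof -
  obtain S where S: "S \<subseteq> high_degree_vars k n F" "card S = s" "finite S"
    using obtain_subset_with_card_n[OF s] by metis
  have Sn: "S \<subseteq> {..<n}" using S(1) unfolding high_degree_vars_def by auto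
  let ?Pos = "\<Union>x\<in>S. posx m k F x"
  have "card ?Pos = (\<Sum>x\<in>S. card (posx m k F x))"
    by (rule card_UN_disjoint[OF S(3)]) (auto simp: posx_def)
  also have "\<dots> = (\<Sum>x\<in>S. degree F x)" using card_posx[OF F] by simp
  also have "\<dots> \<ge> (\<Sum>x\<in>S. Delta k)"
  proof (rule sum_mono)
    fix x assume "x \<in> S"
    hence "x \<in> high_degree_vars k n F" using S(1) by blast
    thus "Delta k \<le> degree F x" unfolding high_degree_vars_def by simp
  qed
  finally have cPos: "Delta k * s \<le> card ?Pos" using S(2) by (simp add: mult.commute)
  obtain P where P: "P \<subseteq> ?Pos" "card P = Delta k * s"
    using obtain_subset_with_card_n[OF cPos] by metis
  have Pm: "P \<subseteq> {..<m} \<times> {..<k}" using P(1) unfolding posx_def by auto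
  have "pos_event P S F" unfolding pos_event_def
  proof (intro ballI, clarify)
    fix j i assume "(j, i) \<in> P"
    hence "(j, i) \<in> ?Pos" using P(1) by blast
    thus "fst (F ! j ! i) \<in> S" unfolding posx_def by auto
  qed
  thus ?thesis using Sn S(2) Pm P(2) by blast
qed

lemma p1_bound:
  assumes n: "n > 0"
  shows "kcnf_prob k n m (\<lambda>F. s \<le> card (high_degree_vars k n F))
     \<le> real (n choose s) * real ((m * k) choose (Delta k * s)) * (real s / real n) ^ (Delta k * s)"
proof -
  let ?SS = "{S. S \<subseteq> {..<n} \<and> card S = s}"
  let ?PP = "{P. P \<subseteq> {..<m} \<times> {..<k} \<and> card P = Delta k * s}"
  have fSS: "finite ?SS" by (rule finite_subset[of _ "Pow {..<n}"]) auto
  have fPP: "finite ?PP" by (rule finite_subset[of _ "Pow ({..<m} \<times> {..<k})"]) auto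
  have "kcnf_prob k n m (\<lambda>F. s \<le> card (high_degree_vars k n F))
     \<le> kcnf_prob k n m (\<lambda>F. \<exists>S\<in>?SS. \<exists>P\<in>?PP. pos_event P S F)"
    by (rule prob_mono) (rule p1_event)
  also have "\<dots> \<le> (\<Sum>S\<in>?SS. kcnf_prob k n m (\<lambda>F. \<exists>P\<in>?PP. pos_event P S F))"
    by (rule prob_UN[OF fSS])
  also have "\<dots> \<le> (\<Sum>S\<in>?SS. \<Sum>P\<in>?PP. kcnf_prob k n m (pos_event P S))"
    by (rule sum_mono) (rule prob_UN[OF fPP])
  also have "\<dots> = (\<Sum>S\<in>?SS. \<Sum>P\<in>?PP. (real s / real n) ^ (Delta k * s))"
  proof (intro sum.cong refl)
    fix S P assume "S \<in> ?SS" "P \<in> ?PP"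
    thus "kcnf_prob k n m (pos_event P S) = (real s / real n) ^ (Delta k * s)"
      using prob_pos_event[of S n P m k] n by simp
  qed
  also have "\<dots> = real (card ?SS) * real (card ?PP) * (real s / real n) ^ (Delta k * s)" by simp
  also have "card ?SS = n choose s" using n_subsets[of "{..<n}" s] by simp
  also have "card ?PP = (m * k) choose (Delta k * s)"
    using n_subsets[of "{..<m} \<times> {..<k}" "Delta k * s"] by (simp add: card_cartesian_product)
  finally show ?thesis .
qed

lemma e_event:
  assumes F: "F \<in> kcnf_space k n m" and notE: "\<not> Eprop k F T" and kT: "(k - 2) * T \<le> n"
  shows "\<exists>t\<in>{1..T}. \<exists>J\<in>{J. J \<subseteq> {..<m} \<and> card J = t}. \<exists>S\<in>{S. S \<subseteq> {..<n} \<and> card S = (k - 2) * t}.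
           pos_event (J \<times> {..<k}) S F"
proof -
  have lenF: "length F = m" using kcnf_space_D(1)[OF F] .
  obtain J where J: "J \<subseteq> {..<m}" "card J \<le> T" "\<not> (k - 2) * card J \<le> card (vars_of F J)"
    using notE lenF unfolding Eprop_def by auto
  let ?t = "card J"
  have t1: "1 \<le> ?t" using J(3) by (cases "card J") auto
  have vJ: "vars_of F J \<subseteq> {..<n}"
    unfolding vars_of_def using J(1) kcnf_space_D(3)[OF F] by blast
  have "(k - 2) * ?t \<le> n" using mult_le_mono2[OF J(2), of "k - 2"] kT by (rule le_trans)
  hence le_n: "(k - 2) * ?t \<le> card {..<n::nat}" by simp
  obtain S where S: "vars_of F J \<subseteq> S" "S \<subseteq> {..<n}" "card S = (k - 2) * ?t"
    using exists_subset_between[OF _ le_n vJ] J(3) by auto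
  have "pos_event (J \<times> {..<k}) S F" unfolding pos_event_def
  proof (intro ballI, clarify)
    fix j i assume ji: "j \<in> J" "i < k"
    have "j < m" using ji J(1) by blast
    hence "length (F ! j) = k" using kcnf_space_D(2)[OF F] by blast
    hence "F ! j ! i \<in> set (F ! j)" using ji by simp
    hence "fst (F ! j ! i) \<in> clause_vars (F ! j)" unfolding clause_vars_def by simp
    thus "fst (F ! j ! i) \<in> S" using ji S(1) unfolding vars_of_def by blast
  qed
  moreover have "card J \<in> {1..T}" using t1 J(2) by simp
  moreover have "J \<in> {J. J \<subseteq> {..<m} \<and> card J = card J}" using J(1) by simp
  moreover have "S \<in> {S. S \<subseteq> {..<n} \<and> card S = (k - 2) * card J}" using S(2,3) by simp
  ultimately show ?thesis by blast
qed

lemma e_bound: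
  assumes n: "n > 0" and kT: "(k - 2) * T \<le> n"
  shows "kcnf_prob k n m (\<lambda>F. \<not> Eprop k F T)
     \<le> (\<Sum>t\<in>{1..T}. real (m choose t) * real (n choose ((k - 2) * t)) * (real ((k - 2) * t) / real n) ^ (t * k))"
proof -
  let ?JJ = "\<lambda>t. {J. J \<subseteq> {..<m} \<and> card J = t}"
  let ?SS = "\<lambda>t. {S. S \<subseteq> {..<n} \<and> card S = (k - 2) * t}"
  have fJJ: "\<And>t. finite (?JJ t)" by (rule finite_subset[of _ "Pow {..<m}"]) auto
  have fSS: "\<And>t. finite (?SS t)" by (rule finite_subset[of _ "Pow {..<n}"]) auto
  have "kcnf_prob k n m (\<lambda>F. \<not> Eprop k F T)
     \<le> kcnf_prob k n m (\<lambda>F. \<exists>t\<in>{1..T}. \<exists>J\<in>?JJ t. \<exists>S\<in>?SS t. pos_event (J \<times> {..<k}) S F)"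
    by (rule prob_mono) (rule e_event[OF _ _ kT])
  also have "\<dots> \<le> (\<Sum>t\<in>{1..T}. kcnf_prob k n m (\<lambda>F. \<exists>J\<in>?JJ t. \<exists>S\<in>?SS t. pos_event (J \<times> {..<k}) S F))"
    by (rule prob_UN) simp
  also have "\<dots> \<le> (\<Sum>t\<in>{1..T}. \<Sum>J\<in>?JJ t. \<Sum>S\<in>?SS t. kcnf_prob k n m (pos_event (J \<times> {..<k}) S))"
  proof (rule sum_mono)
    fix t
    have "kcnf_prob k n m (\<lambda>F. \<exists>J\<in>?JJ t. \<exists>S\<in>?SS t. pos_event (J \<times> {..<k}) S F)
        \<le> (\<Sum>J\<in>?JJ t. kcnf_prob k n m (\<lambda>F. \<exists>S\<in>?SS t. pos_event (J \<times> {..<k}) S F))"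
      by (rule prob_UN[OF fJJ])
    also have "\<dots> \<le> (\<Sum>J\<in>?JJ t. \<Sum>S\<in>?SS t. kcnf_prob k n m (pos_event (J \<times> {..<k}) S))"
      by (rule sum_mono) (rule prob_UN[OF fSS])
    finally show "kcnf_prob k n m (\<lambda>F. \<exists>J\<in>?JJ t. \<exists>S\<in>?SS t. pos_event (J \<times> {..<k}) S F)
        \<le> (\<Sum>J\<in>?JJ t. \<Sum>S\<in>?SS t. kcnf_prob k n m (pos_event (J \<times> {..<k}) S))" .
  qed
  also have "\<dots> = (\<Sum>t\<in>{1..T}. \<Sum>J\<in>?JJ t. \<Sum>S\<in>?SS t. (real ((k - 2) * t) / real n) ^ (t * k))"
  proof (intro sum.cong refl)
    fix t J S assume "J \<in> ?JJ t" "S \<in> ?SS t"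
    moreover hence "finite J" using finite_subset by blast
    moreover have "J \<times> {..<k} \<subseteq> {..<m} \<times> {..<k}" using calculation by blast
    ultimately show "kcnf_prob k n m (pos_event (J \<times> {..<k}) S) = (real ((k - 2) * t) / real n) ^ (t * k)"
      using prob_pos_event[of S n "J \<times> {..<k}" m k] n by (simp add: card_cartesian_product)
  qed
  also have "\<dots> = (\<Sum>t\<in>{1..T}. real (m choose t) * real (n choose ((k - 2) * t)) * (real ((k - 2) * t) / real n) ^ (t * k))"
  proof (intro sum.cong refl)
    fix t
    have "card (?JJ t) = m choose t" using n_subsets[of "{..<m}" t] by simp
    moreover have "card (?SS t) = n choose ((k - 2) * t)" using n_subsets[of "{..<n}" "(k - 2) * t"] by simp
    ultimately show "(\<Sum>J\<in>?JJ t. \<Sum>S\<in>?SS t. (real ((k - 2) * t) / real n) ^ (t * k))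
       = real (m choose t) * real (n choose ((k - 2) * t)) * (real ((k - 2) * t) / real n) ^ (t * k)"
      by simp
  qed
  finally show ?thesis .
qed

lemma inv_fact_le: "t > 0 \<Longrightarrow> 1 / fact t \<le> (exp 1 / real t) ^ t"
proof -
  assume t: "t > 0"
  have "real t ^ t / fact t \<le> exp 1 ^ t" by (rule pow_div_fact_le_exp_pow)
  hence "real t ^ t * (1 / fact t) \<le> exp 1 ^ t" by simp
  moreover have "real t ^ t > 0" using t by simp
  ultimately have "1 / fact t \<le> exp 1 ^ t / real t ^ t" by (simp add: field_simps)
  thus ?thesis by (simp add: power_divide)
qed

lemma termA:
  fixes \<alpha> :: real
  assumes k3: "k \<ge> 3" and t: "t \<ge> 1" and n: "n > 0" and m: "real m \<le> \<alpha> * real n" and a: "\<alpha> \<ge> 0"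
  shows "real (m choose t) * real (n choose ((k - 2) * t)) * (real ((k - 2) * t) / real n) ^ (t * k)
     \<le> (exp 1 ^ (k - 1) * \<alpha> * real (k - 2) ^ 2 * real t / real n) ^ t"
proof -
  define s where "s = (k - 2) * t"
  have tk: "t * k = s + 2 * t" unfolding s_def using k3 by (simp add: algebra_simps)
  have npos: "real n > 0" using n by simp
  have tpos: "real t > 0" using t by simp
  have A: "real (m choose t) \<le> (\<alpha> * real n * exp 1 / real t) ^ t"
  proof -
    have "real (m choose t) \<le> real m ^ t / fact t" by (rule choose_le_pow_fact)
    also have "\<dots> = real m ^ t * (1 / fact t)" by simp
    also have "\<dots> \<le> (\<alpha> * real n) ^ t * (exp 1 / real t) ^ t"
      by (rule mult_mono) (use m inv_fact_le[of t] t in \<open>auto intro: power_mono\<close>)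
    also have "\<dots> = (\<alpha> * real n * exp 1 / real t) ^ t" by (simp add: power_mult_distrib[symmetric])
    finally show ?thesis .
  qed
  have BC: "real (n choose s) * (real s / real n) ^ (t * k)
      \<le> (exp 1 ^ (k - 2) * (real (k - 2) ^ 2 * real t ^ 2 / real n ^ 2)) ^ t"
  proof -
    have "real (n choose s) * (real s / real n) ^ (t * k)
        \<le> (real n ^ s / fact s) * ((real s / real n) ^ s * (real s / real n) ^ (2 * t))"
      unfolding tk power_add by (rule mult_right_mono[OF choose_le_pow_fact]) simp
    also have "\<dots> = (real s ^ s / fact s) * (real s / real n) ^ (2 * t)"
      using npos by (simp add: power_divide)
    also have "\<dots> \<le> exp 1 ^ s * (real s / real n) ^ (2 * t)"
      by (rule mult_right_mono[OF pow_div_fact_le_exp_pow]) simp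
    also have "\<dots> = (exp 1 ^ (k - 2)) ^ t * ((real s / real n) ^ 2) ^ t"
      unfolding s_def by (simp only: power_mult)
    also have "(real s / real n) ^ 2 = real (k - 2) ^ 2 * real t ^ 2 / real n ^ 2"
      unfolding s_def by (simp add: power_divide power_mult_distrib)
    also have "(exp 1 ^ (k - 2)) ^ t * (real (k - 2) ^ 2 * real t ^ 2 / real n ^ 2) ^ t
       = (exp 1 ^ (k - 2) * (real (k - 2) ^ 2 * real t ^ 2 / real n ^ 2)) ^ t"
      by (simp only: power_mult_distrib)
    finally show ?thesis .
  qed
  have "real (m choose t) * real (n choose s) * (real s / real n) ^ (t * k)
      = real (m choose t) * (real (n choose s) * (real s / real n) ^ (t * k))" by simp
  also have "\<dots> \<le> (\<alpha> * real n * exp 1 / real t) ^ t * (exp 1 ^ (k - 2) * (real (k - 2) ^ 2 * real t ^ 2 / real n ^ 2)) ^ t"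
    by (rule mult_mono[OF A BC]) (use a in simp_all)
  also have "\<dots> = ((\<alpha> * real n * exp 1 / real t) * (exp 1 ^ (k - 2) * (real (k - 2) ^ 2 * real t ^ 2 / real n ^ 2))) ^ t"
    by (simp only: power_mult_distrib)
  also have "(\<alpha> * real n * exp 1 / real t) * (exp 1 ^ (k - 2) * (real (k - 2) ^ 2 * real t ^ 2 / real n ^ 2))
      = exp 1 ^ (k - 1) * \<alpha> * real (k - 2) ^ 2 * real t / real n"
  proof -
    have e: "exp 1 ^ (k - 1) = exp (1::real) * exp 1 ^ (k - 2)"
    proof -
      have "k - 1 = Suc (k - 2)" using k3 by simp
      thus ?thesis by (simp only: power_Suc)
    qed
    show ?thesis unfolding e using npos tpos by (simp add: field_simps power2_eq_square)
  qed
  finally show ?thesis unfolding s_def .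
qed

lemma half_sum: "(\<Sum>t\<in>{1..T}. real t * (1/2) ^ (t - 1)) + 2 * (real T + 2) * (1/2) ^ T = 4"
proof (induction T)
  case 0 thus ?case by simp
next
  case (Suc T)
  have "{1..Suc T} = insert (Suc T) {1..T}" by auto
  hence "(\<Sum>t\<in>{1..Suc T}. real t * (1/2) ^ (t - 1)) = real (Suc T) * (1/2) ^ T + (\<Sum>t\<in>{1..T}. real t * (1/2) ^ (t - 1))"
    by simp
  moreover have "(1/2::real) ^ Suc T = (1/2) ^ T / 2" by simp
  moreover have aux: "\<And>S x h. (1 + x) * h + S + 2 * (1 + x + 2) * (h / 2) = S + 2 * (x + 2) * (h::real)"
    by (simp add: algebra_simps)
  ultimately show ?case using Suc.IH aux[of "real T" "(1/2)^T" "\<Sum>t\<in>{1..T}. real t * (1/2) ^ (t - 1)"]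
    by simp
qed

lemma sumB:
  fixes c :: real
  assumes c: "c \<ge> 0" and n: "n > 0" and cT: "c * real T / real n \<le> 1/2"
  shows "(\<Sum>t\<in>{1..T}. (c * real t / real n) ^ t) \<le> 4 * c / real n"
proof -
  have "(\<Sum>t\<in>{1..T}. (c * real t / real n) ^ t) \<le> (\<Sum>t\<in>{1..T}. (c / real n) * (real t * (1/2) ^ (t - 1)))"
  proof (rule sum_mono)
    fix t assume t: "t \<in> {1..T}"
    have x0: "0 \<le> c * real t / real n" using c by simp
    have x1: "c * real t / real n \<le> 1/2"
    proof -
      have "c * real t / real n \<le> c * real T / real n"
        using t c by (intro divide_right_mono mult_left_mono) auto
      thus ?thesis using cT by linarith
    qed
    have "(c * real t / real n) ^ t = (c * real t / real n) * (c * real t / real n) ^ (t - 1)"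
      using t by (metis One_nat_def Suc_pred atLeastAtMost_iff le_zero_eq not_gr_zero power_Suc zero_neq_one)
    also have "\<dots> \<le> (c * real t / real n) * (1/2) ^ (t - 1)"
      by (rule mult_left_mono[OF power_mono[OF x1 x0] x0])
    finally show "(c * real t / real n) ^ t \<le> (c / real n) * (real t * (1/2) ^ (t - 1))" by simp
  qed
  also have "\<dots> = (c / real n) * (\<Sum>t\<in>{1..T}. real t * (1/2) ^ (t - 1))"
    by (simp add: sum_distrib_left)
  also have "\<dots> \<le> (c / real n) * 4"
  proof (rule mult_left_mono)
    have "0 \<le> 2 * (real T + 2) * (1/2::real) ^ T" by simp
    thus "(\<Sum>t\<in>{1..T}. real t * (1/2) ^ (t - 1)) \<le> 4" using half_sum[of T] by linarith
  qed (use c in simp)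
  also have "(c / real n) * 4 = 4 * c / real n" by simp
  finally show ?thesis .
qed

lemma termC:
  fixes \<alpha> :: real
  assumes n: "n > 0" and s: "s \<ge> 1" and a: "\<alpha> > 0" and D: "D \<ge> 1" and k: "k \<ge> 1"
    and m: "real m \<le> \<alpha> * real n"
    and lam: "lm = 2 * exp 1 * (exp 1 * (real k * \<alpha> / real D)) ^ D"
    and sl: "lm * real n \<le> real s"
  shows "real (n choose s) * real ((m * k) choose (D * s)) * (real s / real n) ^ (D * s) \<le> (1/2) ^ s"
proof -
  define a' where "a' = real k * \<alpha> / real D"
  have a'pos: "a' > 0" unfolding a'_def using a D k by simp
  have lpos: "lm > 0" unfolding lam a'_def[symmetric] using a'pos by simp
  have npos: "real n > 0" using n by simp
  have spos: "real s > 0" using s by simp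
  have A: "real (n choose s) \<le> (exp 1 / lm) ^ s"
  proof -
    have "real (n choose s) \<le> real n ^ s / fact s" by (rule choose_le_pow_fact)
    also have "\<dots> = (real n / real s) ^ s * (real s ^ s / fact s)"
      using spos by (simp add: power_divide)
    also have "\<dots> \<le> (1 / lm) ^ s * exp 1 ^ s"
    proof (rule mult_mono)
      have "real n / real s \<le> 1 / lm" using sl lpos spos by (simp add: field_simps)
      thus "(real n / real s) ^ s \<le> (1 / lm) ^ s" by (rule power_mono) simp
    qed (use lpos in \<open>simp_all add: pow_div_fact_le_exp_pow\<close>)
    also have "\<dots> = (exp 1 / lm) ^ s" by (simp add: power_divide)
    finally show ?thesis .
  qed
  have B: "real ((m * k) choose (D * s)) * (real s / real n) ^ (D * s) \<le> ((exp 1 * a') ^ D) ^ s"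
  proof -
    let ?L = "D * s"
    have Lpos: "real ?L > 0" using D s by simp
    have "real ((m * k) choose ?L) * (real s / real n) ^ ?L \<le> (real (m * k) ^ ?L / fact ?L) * (real s / real n) ^ ?L"
      by (rule mult_right_mono[OF choose_le_pow_fact]) simp
    also have "\<dots> = (real (m * k) * real s / real n) ^ ?L / fact ?L"
      by (simp add: power_mult_distrib power_divide)
    also have "\<dots> \<le> (real k * \<alpha> * real s) ^ ?L / fact ?L"
    proof (rule divide_right_mono[OF power_mono])
      have "real (m * k) * real s / real n = real m * (real k * real s) / real n" by simp
      also have "\<dots> \<le> (\<alpha> * real n) * (real k * real s) / real n"
        by (intro divide_right_mono mult_right_mono m) simp_all
      also have "\<dots> = real k * \<alpha> * real s" using npos by simp
      finally show "real (m * k) * real s / real n \<le> real k * \<alpha> * real s" .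
    qed simp_all
    also have "(real k * \<alpha> * real s) = a' * real ?L" unfolding a'_def using D by simp
    also have "(a' * real ?L) ^ ?L / fact ?L = a' ^ ?L * (real ?L ^ ?L / fact ?L)"
      by (simp add: power_mult_distrib)
    also have "\<dots> \<le> a' ^ ?L * exp 1 ^ ?L"
      by (rule mult_left_mono[OF pow_div_fact_le_exp_pow]) (use a'pos in simp)
    also have "\<dots> = ((exp 1 * a') ^ D) ^ s" by (simp add: power_mult power_mult_distrib mult.commute)
    finally show ?thesis .
  qed
  have "real (n choose s) * real ((m * k) choose (D * s)) * (real s / real n) ^ (D * s)
      = real (n choose s) * (real ((m * k) choose (D * s)) * (real s / real n) ^ (D * s))" by simp
  also have "\<dots> \<le> (exp 1 / lm) ^ s * ((exp 1 * a') ^ D) ^ s"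
    by (rule mult_mono[OF A B]) (use lpos in simp_all)
  also have "\<dots> = (exp 1 / lm * (exp 1 * a') ^ D) ^ s" by (simp only: power_mult_distrib)
  also have "exp 1 / lm * (exp 1 * a') ^ D = 1/2"
    unfolding lam a'_def[symmetric] using a'pos by (simp add: field_simps)
  finally show ?thesis .
qed

lemma two_powr_gt: fixes z :: real assumes "z \<ge> 0" shows "z < 2 powr z"
proof -
  define j where "j = nat \<lfloor>z\<rfloor>"
  have zj: "z < real j + 1" unfolding j_def using assms by linarith
  have jz: "real j \<le> z" unfolding j_def using assms by linarith
  have "j + 1 \<le> (2::nat) ^ j" using less_exp[of j] by (simp add: Suc_le_eq)
  hence "real j + 1 \<le> 2 ^ j" by (metis of_nat_1 of_nat_add of_nat_le_iff of_nat_numeral of_nat_power)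
  also have "(2::real) ^ j = 2 powr real j" by (simp add: powr_realpow)
  also have "\<dots> \<le> 2 powr z" using jz by (rule powr_mono) simp
  finally show ?thesis using zj by linarith
qed

lemma nat_ineq:
  fixes k D :: nat
  assumes k: "k \<ge> 8" and D: "D \<ge> k"
  shows "8 * 3 ^ k * D \<le> k ^ (D + 1)"
proof -
  have "3 ^ k \<le> (3::nat) ^ D" using D by (rule power_increasing) simp
  moreover have "D \<le> (2::nat) ^ D" using less_exp[of D] by (rule less_imp_le)
  ultimately have "8 * 3 ^ k * D \<le> 8 * 3 ^ D * 2 ^ D" by (intro mult_mono) simp_all
  also have "\<dots> = 8 * 6 ^ D" by (simp add: power_mult_distrib[symmetric])
  also have "\<dots> \<le> k * k ^ D" using k by (intro mult_mono power_mono) simp_all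
  also have "\<dots> = k ^ (D + 1)" by simp
  finally show ?thesis .
qed

lemma Delta_facts:
  assumes k: "k \<ge> 1000000"
  shows "2 powr ((r0 - 2 * delta) * real k) \<le> real (Delta k)" "real k \<le> real (Delta k)" "2 \<le> Delta k"
proof -
  define P where "P = 2 powr ((r0 - 2 * delta) * real k)"
  have x: "r0 - 2 * delta = 0.117821" by (simp add: r0_def delta_def)
  have Ppos: "P > 0" unfolding P_def by simp
  have DP: "real (Delta k) = of_int \<lceil>P\<rceil>" unfolding Delta_def P_def
    using Ppos P_def by simp
  show P1: "2 powr ((r0 - 2 * delta) * real k) \<le> real (Delta k)" using DP P_def by simp
  define z where "z = 0.117821 * real k / 2"
  have z0: "z \<ge> 0" unfolding z_def by simp
  have "P = 2 powr (z + z)" unfolding P_def x z_def by simp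
  also have "\<dots> = (2 powr z) * (2 powr z)" by (rule powr_add)
  finally have Pz: "P = (2 powr z) * (2 powr z)" .
  have "z * z < 2 powr z * 2 powr z"
    using two_powr_gt[OF z0] z0 by (intro mult_strict_mono) simp_all
  moreover have "real k \<le> z * z"
  proof -
    have "z * z = (0.117821 / 2) ^ 2 * real k * real k" unfolding z_def by (simp add: power2_eq_square)
    moreover have "1 \<le> (0.117821 / 2) ^ 2 * real k"
    proof -
      have "(0.117821 / 2) ^ 2 * 1000000 \<le> (0.117821 / 2) ^ 2 * (real k :: real)"
        using k by (intro mult_left_mono) simp_all
      moreover have "(1::real) \<le> (0.117821 / 2) ^ 2 * 1000000" by (simp add: power2_eq_square)
      ultimately show ?thesis by linarith
    qed
    ultimately show ?thesis using k by (simp add: mult_le_cancel_right1) 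
  qed
  ultimately have "real k \<le> P" using Pz by linarith
  thus "real k \<le> real (Delta k)" using P1 P_def by linarith
  hence "real 2 \<le> real (Delta k)" using k by linarith
  thus "2 \<le> Delta k" by (simp only: of_nat_le_iff)
qed

lemma beta_bound:
  assumes k: "k \<ge> 1000000"
  shows "54 / real k \<le> 1 - (r0 - delta) * real k / (r0 * (real k - 3))"
proof -
  have kr: "real k \<ge> 1000000" using k by simp
  have pos: "r0 * (real k - 3) > 0" using kr by (simp add: r0_def)
  have h1: "(1/100000) * real k \<ge> 57 * (117841/1000000)" using kr by simp
  have h2: "(1/100000) * real k * real k \<ge> 57 * (117841/1000000) * real k"
    by (rule mult_right_mono[OF h1]) simp
  have e1: "(real k - 54) * ((117841/1000000) * (real k - 3))
      = (117841/1000000) * (real k * real k) - 57 * (117841/1000000) * real k + 162 * (117841/1000000)"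
    by (simp add: field_simps)
  have e2: "((117841/1000000) - 1/100000) * real k * real k
      = (117841/1000000) * (real k * real k) - (1/100000) * (real k * real k)"
    by (simp add: algebra_simps)
  have "((117841/1000000) - 1/100000) * real k * real k \<le> (real k - 54) * ((117841/1000000) * (real k - 3))"
    unfolding e1 e2 using h2 by (simp add: algebra_simps)
  hence key: "(r0 - delta) * real k * real k \<le> (real k - 54) * (r0 * (real k - 3))"
    by (simp add: r0_def delta_def)
  have kpos: "real k > 0" using kr by simp
  have "(r0 - delta) * real k / (r0 * (real k - 3)) = ((r0 - delta) * real k * real k) / (r0 * (real k - 3) * real k)"
    using kpos by simp
  also have "\<dots> \<le> ((real k - 54) * (r0 * (real k - 3))) / (r0 * (real k - 3) * real k)"
    by (rule divide_right_mono[OF key]) (use pos kpos in simp)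
  also have "\<dots> = (real k - 54) / real k" using pos k by (simp add: r0_def)
  finally have "(r0 - delta) * real k / (r0 * (real k - 3)) \<le> (real k - 54) / real k" .
  also have "(real k - 54) / real k = 1 - 54 / real k" using kr by (simp add: field_simps)
  finally show ?thesis by linarith
qed

lemma k_consts:
  fixes \<alpha> :: real
  assumes k: "k \<ge> 1000000" and a0: "0 < \<alpha>" and a1: "\<alpha> \<le> alpha0 k"
  defines "A \<equiv> real k * \<alpha> / real (Delta k)"
  defines "\<beta> \<equiv> 1 - (r0 - delta) * real k / (r0 * (real k - 3))"
  shows "0 < \<beta>"
    and "2 * exp 1 * (exp 1 * A) ^ Delta k \<le> \<alpha> * \<beta> / 2"
    and "2 * exp 1 * (exp 1 * A) ^ Delta k * (exp 1 ^ (k - 1) * \<alpha> * real (k - 2) ^ 2) \<le> 1/4"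
    and "2 * exp 1 * (exp 1 * A) ^ Delta k \<le> 1 / (2 * real k)"
proof -
  define P where "P = 2 powr ((r0 - 2 * delta) * real k)"
  define D where "D = real (Delta k)"
  have kr: "real k \<ge> 1000000" using k by simp
  have PD: "P \<le> D" unfolding P_def D_def using Delta_facts(1)[OF k] .
  have kD: "real k \<le> D" unfolding D_def using Delta_facts(2)[OF k] .
  have D2: "2 \<le> Delta k" using Delta_facts(3)[OF k] .
  have Dpos: "D > 0" using kD kr by linarith
  have Ppos: "P > 0" unfolding P_def by simp
  have al0: "alpha0 k = P / real k ^ 3" unfolding alpha0_def P_def ..
  have Apos: "A > 0" unfolding A_def D_def[symmetric] using a0 kr Dpos by simp
  have Ale: "A \<le> 1 / real k ^ 2"
  proof -
    have "A = real k * \<alpha> / D" unfolding A_def D_def ..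
    also have "\<dots> \<le> real k * (P / real k ^ 3) / D"
      using a1 al0 kr Dpos by (intro divide_right_mono mult_left_mono) simp_all
    also have "\<dots> = (P / D) / real k ^ 2" using kr by (simp add: field_simps power3_eq_cube power2_eq_square)
    also have "\<dots> \<le> 1 / real k ^ 2"
      using PD Dpos by (intro divide_right_mono) (simp_all add: divide_le_eq_1)
    finally show ?thesis .
  qed
  have e3: "exp (1::real) \<le> 3" by (rule exp_le)
  have e0: "exp (1::real) > 0" by simp
  have eA: "exp 1 * A \<le> 1 / real k"
  proof -
    have "exp 1 * A \<le> 3 * (1 / real k ^ 2)" using e3 Ale Apos by (intro mult_mono) simp_all
    also have "\<dots> \<le> 1 / real k" using kr by (simp add: field_simps power2_eq_square)
    finally show ?thesis .
  qed
  have eA0: "0 \<le> exp 1 * A" using Apos by simp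
  have "1 / real k \<le> 1" using kr by simp
  hence eA1: "exp 1 * A \<le> 1" using eA by linarith
  have pw: "(exp 1 * A) ^ Delta k \<le> (exp 1 * A) ^ 2"
    by (rule power_decreasing[OF D2 eA0 eA1])
  have lm1: "2 * exp 1 * (exp 1 * A) ^ Delta k \<le> 54 * A ^ 2"
  proof -
    have "2 * exp 1 * (exp 1 * A) ^ Delta k \<le> 2 * exp 1 * (exp 1 * A) ^ 2"
      using pw by simp
    also have "\<dots> = 2 * exp 1 ^ 3 * A ^ 2" by (simp add: power2_eq_square power3_eq_cube)
    also have "\<dots> \<le> 2 * 3 ^ 3 * A ^ 2"
      using e3 by (intro mult_right_mono mult_left_mono power_mono) simp_all
    finally show ?thesis by simp
  qed
  have A2: "A ^ 2 \<le> 1 / real k ^ 4"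
  proof -
    have "A ^ 2 \<le> (1 / real k ^ 2) ^ 2" using Ale Apos by (intro power_mono) simp_all
    thus ?thesis by (simp add: power_divide power_mult[symmetric])
  qed
  have bb: "54 / real k \<le> \<beta>" unfolding \<beta>_def by (rule beta_bound[OF k])
  show "0 < \<beta>" using bb kr by (smt (verit) divide_pos_pos)
  show "2 * exp 1 * (exp 1 * A) ^ Delta k \<le> 1 / (2 * real k)"
  proof -
    have "54 * A ^ 2 \<le> 54 / real k ^ 4" using A2 by simp
    also have "\<dots> \<le> 1 / (2 * real k)"
    proof -
      have "(1000000::real) ^ 3 \<le> real k ^ 3" using kr by (intro power_mono) simp_all
      hence "108 \<le> real k * (real k * real k)" by (simp add: power3_eq_cube)
      thus ?thesis using kr by (simp add: field_simps power4_eq_xxxx)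
    qed
    finally show ?thesis using lm1 by linarith
  qed
  show "2 * exp 1 * (exp 1 * A) ^ Delta k \<le> \<alpha> * \<beta> / 2"
  proof -
    have al: "\<alpha> = A * D / real k" unfolding A_def D_def using kr Dpos D_def by (simp add: field_simps)
    have "54 * A ^ 2 = 54 * A * A" by (simp add: power2_eq_square)
    also have "\<dots> \<le> 54 * A * (1 / real k ^ 2)"
      using Ale Apos Ale by (intro mult_left_mono) (simp_all add: power2_eq_square)
    also have "\<dots> \<le> 27 * A * D / real k ^ 2"
      using Apos kD kr by (simp add: field_simps)
    also have "\<dots> = (A * D / real k) * (54 / real k) / 2" using kr by (simp add: field_simps power2_eq_square)
    also have "\<dots> \<le> (A * D / real k) * \<beta> / 2"
      using bb Apos Dpos kr by (intro divide_right_mono mult_left_mono) simp_all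
    also have "\<dots> = \<alpha> * \<beta> / 2" using al by simp
    finally show ?thesis using lm1 by linarith
  qed
  show "2 * exp 1 * (exp 1 * A) ^ Delta k * (exp 1 ^ (k - 1) * \<alpha> * real (k - 2) ^ 2) \<le> 1/4"
  proof -
    have al: "\<alpha> \<le> D / real k ^ 3"
    proof -
      have "\<alpha> = A * D / real k" unfolding A_def D_def using kr Dpos D_def by (simp add: field_simps)
      also have "\<dots> \<le> (1 / real k ^ 2) * D / real k"
        using Ale Dpos kr by (intro divide_right_mono mult_right_mono) simp_all
      also have "\<dots> = D / real k ^ 3" using kr by (simp add: field_simps power2_eq_square power3_eq_cube)
      finally show ?thesis .
    qed
    have L: "2 * exp 1 * (exp 1 * A) ^ Delta k \<le> 6 * (1 / real k) ^ Delta k"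
    proof -
      have "(exp 1 * A) ^ Delta k \<le> (1 / real k) ^ Delta k" by (rule power_mono[OF eA eA0])
      hence "2 * exp 1 * (exp 1 * A) ^ Delta k \<le> 2 * exp 1 * (1 / real k) ^ Delta k" using e0 by simp
      also have "\<dots> \<le> 2 * 3 * (1 / real k) ^ Delta k" using e3 by (intro mult_right_mono) simp_all
      finally show ?thesis by simp
    qed
    have C: "exp 1 ^ (k - 1) * \<alpha> * real (k - 2) ^ 2 \<le> 3 ^ (k - 1) * (D / real k)"
    proof -
      have k2: "real (k - 2) ^ 2 \<le> real k ^ 2" by (intro power_mono) simp_all
      have "exp 1 ^ (k - 1) * \<alpha> * real (k - 2) ^ 2 \<le> 3 ^ (k - 1) * (D / real k ^ 3) * real k ^ 2"
        using e3 al k2 a0 Dpos by (intro mult_mono power_mono) simp_all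
      also have "\<dots> = 3 ^ (k - 1) * (D / real k)" using kr by (simp add: field_simps power2_eq_square power3_eq_cube)
      finally show ?thesis .
    qed
    have "2 * exp 1 * (exp 1 * A) ^ Delta k * (exp 1 ^ (k - 1) * \<alpha> * real (k - 2) ^ 2)
        \<le> 6 * (1 / real k) ^ Delta k * (3 ^ (k - 1) * (D / real k))"
      by (rule mult_mono[OF L C]) (use a0 in simp_all)
    also have "\<dots> = 2 * 3 ^ k * D / real k ^ (Delta k + 1)"
    proof -
      have "(3::real) ^ k = 3 * 3 ^ (k - 1)" using kr by (metis power_eq_if not_one_le_zero of_nat_0 not_numeral_le_zero le_zero_eq)
      thus ?thesis using kr by (simp add: field_simps power_divide)
    qed
    also have "\<dots> \<le> 1/4"
    proof -
      have "8 * 3 ^ k * Delta k \<le> k ^ (Delta k + 1)"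
        by (rule nat_ineq) (use k Delta_facts(2)[OF k] in simp_all)
      hence "real (8 * 3 ^ k * Delta k) \<le> real (k ^ (Delta k + 1))" by (simp only: of_nat_le_iff)
      hence "8 * 3 ^ k * D \<le> real k ^ (Delta k + 1)" unfolding D_def by simp
      moreover have "real k ^ (Delta k + 1) > 0" using kr by simp
      ultimately show ?thesis by (simp add: field_simps)
    qed
    finally show ?thesis .
  qed
qed

lemma Eprop_mono: "Eprop k F T \<Longrightarrow> T' \<le> T \<Longrightarrow> Eprop k F T'"
  unfolding Eprop_def by auto

lemma bound_n:
  fixes \<alpha> lm c \<beta> :: real
  assumes k: "k \<ge> 1000000" and a0: "0 < \<alpha>"
    and lam: "lm = 2 * exp 1 * (exp 1 * (real k * \<alpha> / real (Delta k))) ^ Delta k"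
    and bdef: "\<beta> = 1 - (r0 - delta) * real k / (r0 * (real k - 3))"
    and cdef: "c = exp 1 ^ (k - 1) * \<alpha> * real (k - 2) ^ 2"
    and lpos: "lm > 0" and bpos: "\<beta> > 0"
    and l1: "lm \<le> \<alpha> * \<beta> / 2" and l2: "lm * c \<le> 1/4" and l3: "lm \<le> 1 / (2 * real k)"
    and n1: "n \<ge> 1" and n2: "real n \<ge> 4 * c" and n3: "real n \<ge> 2 * real k" and n4: "real n \<ge> 2 / (\<alpha> * \<beta>)"
  shows "1 - 1 / (lm * real n) - 4 * c / real n \<le>
    kcnf_prob k n (nat \<lfloor>\<alpha> * real n\<rfloor>)
       (\<lambda>F. \<forall>V. r0_distributed k n F V \<longrightarrow>
          real (card V) \<ge> (r0 - delta) * (real k * \<alpha> / real (Delta k)) * real n)"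
proof -
  define m where "m = nat \<lfloor>\<alpha> * real n\<rfloor>"
  define s where "s = nat \<lceil>lm * real n\<rceil>"
  have nr: "real n \<ge> 1" using n1 by simp
  have npos: "n > 0" using n1 by simp
  have kr: "real k \<ge> 1000000" using k by simp
  have k3: "k \<ge> 3" using k by simp
  have cpos: "c \<ge> 0" unfolding cdef using a0 by simp
  have m_le: "real m \<le> \<alpha> * real n" unfolding m_def using a0 by simp
  have m_ge: "real m \<ge> \<alpha> * real n - 1" unfolding m_def using a0 by linarith
  have x0: "0 \<le> lm * real n" using lpos by simp
  have sr: "real s = of_int \<lceil>lm * real n\<rceil>" unfolding s_def using x0 by simp
  have s_ge: "lm * real n \<le> real s" unfolding sr by simp
  have s_lt: "real s < lm * real n + 1" unfolding sr using ceiling_correct[of "lm * real n"] by linarith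
  have lnpos: "0 < lm * real n" using lpos nr by simp
  hence spos: "real s > 0" using s_ge by linarith
  hence s1: "s \<ge> 1" by simp
  have impl: "\<And>F. F \<in> kcnf_space k n m \<Longrightarrow> \<not> (s \<le> card (high_degree_vars k n F)) \<and> Eprop k F s \<Longrightarrow>
      (\<forall>V. r0_distributed k n F V \<longrightarrow> real (card V) \<ge> (r0 - delta) * (real k * \<alpha> / real (Delta k)) * real n)"
  proof (intro allI impI)
    fix F V assume F: "F \<in> kcnf_space k n m"
      and G: "\<not> (s \<le> card (high_degree_vars k n F)) \<and> Eprop k F s"
      and R: "r0_distributed k n F V"
    let ?v0 = "card (high_degree_vars k n F)"
    have v0s: "?v0 + 1 \<le> s" using G by simp
    have E: "Eprop k F (?v0 + 1)" using G v0s Eprop_mono by blast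
    have main: "(real m - real ?v0) * (r0 * (real k - 3)) \<le> real (card V) * real (Delta k)"
      by (rule det_main[OF F k3 E R])
    have v0r: "real ?v0 \<le> \<alpha> * \<beta> / 2 * real n"
    proof -
      have "real ?v0 + 1 \<le> real s" using v0s by linarith
      hence "real ?v0 \<le> lm * real n" using s_lt by linarith
      also have "\<dots> \<le> \<alpha> * \<beta> / 2 * real n" using l1 nr by (intro mult_right_mono) simp_all
      finally show ?thesis .
    qed
    have rk: "r0 * (real k - 3) > 0" using kr by (simp add: r0_def)
    have ident: "r0 * (real k - 3) * (1 - \<beta>) = (r0 - delta) * real k"
    proof -
      have h: "1 - \<beta> = (r0 - delta) * real k / (r0 * (real k - 3))" unfolding bdef by simp
      have Yne: "r0 * (real k - 3) \<noteq> 0" using rk by (intro notI) simp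
      show ?thesis unfolding h times_divide_eq_right nonzero_divide_eq_eq[OF Yne] by (rule mult.commute)
    qed
    have ab: "\<alpha> * \<beta> * real n / 2 \<ge> 1" using n4 a0 bpos by (simp add: field_simps)
    have "(r0 - delta) * real k * \<alpha> * real n \<le> (real m - real ?v0) * (r0 * (real k - 3))"
    proof -
      have "(real m - real ?v0) \<ge> \<alpha> * real n - 1 - \<alpha> * \<beta> / 2 * real n" using m_ge v0r by linarith
      hence "(real m - real ?v0) * (r0 * (real k - 3)) \<ge> (\<alpha> * real n - 1 - \<alpha> * \<beta> / 2 * real n) * (r0 * (real k - 3))"
        using rk by (intro mult_right_mono) simp_all
      moreover have "(\<alpha> * real n - 1 - \<alpha> * \<beta> / 2 * real n) * (r0 * (real k - 3))
          = (r0 * (real k - 3) * (1 - \<beta>)) * \<alpha> * real n + r0 * (real k - 3) * (\<alpha> * \<beta> * real n / 2 - 1)"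
        by (simp add: algebra_simps)
      moreover have "r0 * (real k - 3) * (\<alpha> * \<beta> * real n / 2 - 1) \<ge> 0" using rk ab by simp
      ultimately show ?thesis unfolding ident by linarith
    qed
    hence key: "(r0 - delta) * real k * \<alpha> * real n \<le> real (card V) * real (Delta k)" using main by linarith
    have Dpos: "real (Delta k) > 0" using Delta_facts(3)[OF k] by simp
    have "(r0 - delta) * (real k * \<alpha> / real (Delta k)) * real n = ((r0 - delta) * real k * \<alpha> * real n) / real (Delta k)"
      by simp
    also have "\<dots> \<le> (real (card V) * real (Delta k)) / real (Delta k)"
      by (rule divide_right_mono[OF key]) (use Dpos in simp)
    also have "\<dots> = real (card V)" using Dpos by simp
    finally show "real (card V) \<ge> (r0 - delta) * (real k * \<alpha> / real (Delta k)) * real n" .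
  qed
  have P1: "kcnf_prob k n m (\<lambda>F. s \<le> card (high_degree_vars k n F)) \<le> 1 / (lm * real n)"
  proof -
    have "kcnf_prob k n m (\<lambda>F. s \<le> card (high_degree_vars k n F))
        \<le> real (n choose s) * real ((m * k) choose (Delta k * s)) * (real s / real n) ^ (Delta k * s)"
      by (rule p1_bound[OF npos])
    also have "\<dots> \<le> (1/2) ^ s"
      by (rule termC[OF npos s1 a0 _ _ m_le lam s_ge]) (use Delta_facts(3)[OF k] k in simp_all)
    also have "(1/2::real) ^ s \<le> 1 / real s"
    proof -
      have "s < 2 ^ s" by (rule less_exp)
      hence "real s \<le> 2 ^ s" by (metis less_imp_le of_nat_le_iff of_nat_numeral of_nat_power)
      thus ?thesis using s1 by (simp add: power_divide field_simps)
    qed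
    also have "\<dots> \<le> 1 / (lm * real n)"
      using s_ge lnpos spos by (intro divide_left_mono) simp_all
    finally show ?thesis .
  qed
  have E1: "kcnf_prob k n m (\<lambda>F. \<not> Eprop k F s) \<le> 4 * c / real n"
  proof -
    have kT: "(k - 2) * s \<le> n"
    proof -
      have "real ((k - 2) * s) = real (k - 2) * real s" by simp
      also have "\<dots> \<le> real k * (lm * real n + 1)" using s_lt by (intro mult_mono) simp_all
      also have "\<dots> = real k * lm * real n + real k" by (simp add: algebra_simps)
      also have "real k * lm \<le> 1/2" using l3 kr by (simp add: field_simps)
      hence "real k * lm * real n \<le> 1/2 * real n" using nr by (intro mult_right_mono) simp_all
      hence "real k * lm * real n + real k \<le> real n" using n3 by linarith
      finally show ?thesis by (simp only: of_nat_le_iff)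
    qed
    have "kcnf_prob k n m (\<lambda>F. \<not> Eprop k F s)
       \<le> (\<Sum>t\<in>{1..s}. real (m choose t) * real (n choose ((k - 2) * t)) * (real ((k - 2) * t) / real n) ^ (t * k))"
      by (rule e_bound[OF npos kT])
    also have "\<dots> \<le> (\<Sum>t\<in>{1..s}. (c * real t / real n) ^ t)"
    proof (rule sum_mono)
      fix t assume "t \<in> {1..s}"
      hence t1: "t \<ge> 1" by simp
      show "real (m choose t) * real (n choose ((k - 2) * t)) * (real ((k - 2) * t) / real n) ^ (t * k)
          \<le> (c * real t / real n) ^ t"
        using termA[OF k3 t1 npos m_le, of] a0 unfolding cdef by simp
    qed
    also have "\<dots> \<le> 4 * c / real n"
    proof (rule sumB[OF cpos npos])
      have "c * real s / real n \<le> c * (lm * real n + 1) / real n"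
        using s_lt cpos nr by (intro divide_right_mono mult_left_mono) simp_all
      also have "\<dots> = lm * c + c / real n" using nr by (simp add: field_simps)
      also have "c / real n \<le> 1/4" using n2 nr by (simp add: field_simps)
      hence "lm * c + c / real n \<le> 1/2" using l2 by linarith
      finally show "c * real s / real n \<le> 1/2" .
    qed
    finally show ?thesis .
  qed
  have c1: "kcnf_prob k n m (\<lambda>F. \<not> (s \<le> card (high_degree_vars k n F)) \<and> Eprop k F s)
      = 1 - kcnf_prob k n m (\<lambda>F. \<not> (\<not> (s \<le> card (high_degree_vars k n F)) \<and> Eprop k F s))"
    by (rule prob_compl[OF npos])
  have c2: "kcnf_prob k n m (\<lambda>F. \<not> (\<not> (s \<le> card (high_degree_vars k n F)) \<and> Eprop k F s))
      \<le> kcnf_prob k n m (\<lambda>F. s \<le> card (high_degree_vars k n F) \<or> \<not> Eprop k F s)"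
    by (rule prob_mono) simp
  have c3: "kcnf_prob k n m (\<lambda>F. s \<le> card (high_degree_vars k n F) \<or> \<not> Eprop k F s)
      \<le> kcnf_prob k n m (\<lambda>F. s \<le> card (high_degree_vars k n F)) + kcnf_prob k n m (\<lambda>F. \<not> Eprop k F s)"
    by (rule prob_or)
  have "1 - 1 / (lm * real n) - 4 * c / real n \<le> kcnf_prob k n m (\<lambda>F. \<not> (s \<le> card (high_degree_vars k n F)) \<and> Eprop k F s)"
    using c1 c2 c3 P1 E1 by linarith
  also have "\<dots> \<le> kcnf_prob k n m (\<lambda>F. \<forall>V. r0_distributed k n F V \<longrightarrow>
          real (card V) \<ge> (r0 - delta) * (real k * \<alpha> / real (Delta k)) * real n)"
    by (rule prob_mono) (rule impl)
  finally show ?thesis unfolding m_def by simp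
qed

theorem corollary5p8:
  shows "\<exists>k0::nat. \<forall>k\<ge>k0. \<forall>\<alpha>::real. 0 < \<alpha> \<longrightarrow> \<alpha> \<le> alpha0 k \<longrightarrow>
    (\<lambda>n. kcnf_prob k n (nat \<lfloor>\<alpha> * real n\<rfloor>)
       (\<lambda>F. \<forall>V. r0_distributed k n F V \<longrightarrow>
          real (card V) \<ge> (r0 - delta) * (real k * \<alpha> / real (Delta k)) * real n))
    \<longlonglongrightarrow> 1"
proof (intro exI[of _ 1000000] allI impI)
  fix k :: nat and \<alpha> :: real
  assume k: "k \<ge> 1000000" and a0: "0 < \<alpha>" and a1: "\<alpha> \<le> alpha0 k"
  define lm where "lm = 2 * exp 1 * (exp 1 * (real k * \<alpha> / real (Delta k))) ^ Delta k"
  define \<beta> where "\<beta> = 1 - (r0 - delta) * real k / (r0 * (real k - 3))"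
  define c where "c = exp 1 ^ (k - 1) * \<alpha> * real (k - 2) ^ 2"
  note kc = k_consts[OF k a0 a1]
  have bpos: "\<beta> > 0" unfolding \<beta>_def using kc(1) .
  have l1: "lm \<le> \<alpha> * \<beta> / 2" unfolding lm_def \<beta>_def using kc(2) .
  have l2: "lm * c \<le> 1/4" unfolding lm_def c_def using kc(3) .
  have l3: "lm \<le> 1 / (2 * real k)" unfolding lm_def using kc(4) .
  have Dpos: "real (Delta k) > 0" using Delta_facts(3)[OF k] by simp
  have kpos: "real k > 0" using k by simp
  have lpos: "lm > 0" unfolding lm_def using a0 Dpos kpos by simp
  define g where "g = (\<lambda>n::nat. 1 - (1 / lm) * (1 / real n) - (4 * c) * (1 / real n))"
  define N where "N = nat \<lceil>max (max (4 * c) (2 * real k)) (2 / (\<alpha> * \<beta>))\<rceil> + 1"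
  show "(\<lambda>n. kcnf_prob k n (nat \<lfloor>\<alpha> * real n\<rfloor>)
       (\<lambda>F. \<forall>V. r0_distributed k n F V \<longrightarrow>
          real (card V) \<ge> (r0 - delta) * (real k * \<alpha> / real (Delta k)) * real n))
    \<longlonglongrightarrow> 1"
  proof (rule real_tendsto_sandwich[where f = g and h = "\<lambda>_. 1"])
    show "\<forall>\<^sub>F n in sequentially. g n \<le> kcnf_prob k n (nat \<lfloor>\<alpha> * real n\<rfloor>)
       (\<lambda>F. \<forall>V. r0_distributed k n F V \<longrightarrow>
          real (card V) \<ge> (r0 - delta) * (real k * \<alpha> / real (Delta k)) * real n)"
    proof (rule eventually_sequentiallyI[of N])
      fix n assume nN: "N \<le> n"
      have Nge: "real N \<ge> max (max (4 * c) (2 * real k)) (2 / (\<alpha> * \<beta>))"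
        unfolding N_def by linarith
      have nr: "real n \<ge> real N" using nN by simp
      have n1: "n \<ge> 1" using nN unfolding N_def by simp
      have n2: "real n \<ge> 4 * c" using Nge nr by linarith
      have n3: "real n \<ge> 2 * real k" using Nge nr by linarith
      have n4: "real n \<ge> 2 / (\<alpha> * \<beta>)" using Nge nr by linarith
      have "g n = 1 - 1 / (lm * real n) - 4 * c / real n" unfolding g_def by simp
      also have "\<dots> \<le> kcnf_prob k n (nat \<lfloor>\<alpha> * real n\<rfloor>)
       (\<lambda>F. \<forall>V. r0_distributed k n F V \<longrightarrow>
          real (card V) \<ge> (r0 - delta) * (real k * \<alpha> / real (Delta k)) * real n)"
        by (rule bound_n[OF k a0 lm_def \<beta>_def c_def lpos bpos l1 l2 l3 n1 n2 n3 n4])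
      finally show "g n \<le> kcnf_prob k n (nat \<lfloor>\<alpha> * real n\<rfloor>)
       (\<lambda>F. \<forall>V. r0_distributed k n F V \<longrightarrow>
          real (card V) \<ge> (r0 - delta) * (real k * \<alpha> / real (Delta k)) * real n)" .
    qed
    show "\<forall>\<^sub>F n in sequentially. kcnf_prob k n (nat \<lfloor>\<alpha> * real n\<rfloor>)
       (\<lambda>F. \<forall>V. r0_distributed k n F V \<longrightarrow>
          real (card V) \<ge> (r0 - delta) * (real k * \<alpha> / real (Delta k)) * real n) \<le> 1"
      by (rule always_eventually) (simp add: prob_le1)
    have z: "(\<lambda>n::nat. 1 / real n) \<longlonglongrightarrow> 0" by (rule lim_inverse_n')
    have "(\<lambda>n. 1 - (1 / lm) * (1 / real n) - (4 * c) * (1 / real n)) \<longlonglongrightarrow> 1 - (1 / lm) * 0 - (4 * c) * 0"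
      by (intro tendsto_intros z)
    thus "g \<longlonglongrightarrow> 1" unfolding g_def by simp
    show "(\<lambda>_. 1::real) \<longlonglongrightarrow> 1" by simp
  qed
qed

end
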